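(* Let $e_i=R(e_{i-1},\varepsilon_i)$ with $R$ measurable and $(\varepsilon_i)$ i.i.d., and assume there exist $q>0$ and $t_0$ such that $E(\log\ell_{\varepsilon_0})<0$ and $\ell_{\varepsilon_0}+|R(t_0,\varepsilon_0)|\in\mathcal L^q$, where $\ell_{\varepsilon_0}=\sup_{x\ne x'}|R(x,\varepsilon_0)-R(x',\varepsilon_0)|/|x-x'|$ (so that $e_i=G(\mathcal F_i)$ is the stationary solution). Let $F_1(u\mid v)=\mathbb P[R(v,\varepsilon_0)\le u]$ and $F_1^{(l)}(u\mid v)=\partial^lF_1(u\mid v)/\partial u^l$. Assume there is $C_0<\infty$ with $$\sup_{u,v}\Big|\frac{\partial F_1^{(l)}(u\mid v)}{\partial v}\Big|+\sup_{u,v}|F_1^{(l)}(u\mid v)|<C_0,\qquad l=0,\dots,p.$$ Then there is $\chi\in(0,1)$ with $\omega_l(i)=O(\chi^i)$ for $l=0,\dots,p$; in particular $\sum_i\omega_l(i)<\infty$.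
   Context: $\mathcal F_k=(\dots,\varepsilon_{k-1},\varepsilon_k)$; $(\varepsilon_k')$ an independent i.i.d. copy; $\mathcal F_k^*=(\dots,\varepsilon_{-1},\varepsilon_0',\varepsilon_1,\dots,\varepsilon_k)$ for $k\ge0$, $e_k^*=G(\mathcal F_k^* )$. By the Markov structure the conditional distribution function of $e_{i+1}$ given $\mathcal F_i$ is $F_1(u\mid e_i)$, and $F_1(u\mid\mathcal F_i^* )$ means $F_1(u\mid e_i^* )$. $\omega_l(i)=\sup_{u\in\mathbb R}\|F_1^{(l)}(u\mid e_i)-F_1^{(l)}(u\mid e_i^* )\|$, $\|V\|=(EV^2)^{1/2}$. *)

theory Defs
  imports "HOL-Probability.Probability" "HOL-Library.Landau_Symbols"
begin

definition lipR :: "(real \<Rightarrow> 'e \<Rightarrow> real) \<Rightarrow> 'e \<Rightarrow> ennreal" where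
  "lipR R z = (SUP xx' \<in> {(x, x'). x \<noteq> x'}.
       ennreal (\<bar>R (fst xx') z - R (snd xx') z\<bar> / \<bar>fst xx' - snd xx'\<bar>))"

text \<open>Positive and negative parts of log for a value in [0,\<infinity>]; log 0 = -\<infinity>.\<close>
definition log_pos :: "ennreal \<Rightarrow> ennreal" where
  "log_pos L = (if L = \<infinity> then \<infinity> else ennreal (max 0 (ln (enn2real L))))"

definition log_neg :: "ennreal \<Rightarrow> ennreal" where
  "log_neg L = (if L = 0 then \<infinity> else if L = \<infinity> then 0
                else ennreal (max 0 (- ln (enn2real L))))"

definition F1 :: "'a measure \<Rightarrow> (real \<Rightarrow> 'e \<Rightarrow> real) \<Rightarrow> ('a \<Rightarrow> 'e) \<Rightarrow> real \<Rightarrow> real \<Rightarrow> real" where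
  "F1 M R X u v = measure M {\<omega> \<in> space M. R v (X \<omega>) \<le> u}"

definition F1l :: "'a measure \<Rightarrow> (real \<Rightarrow> 'e \<Rightarrow> real) \<Rightarrow> ('a \<Rightarrow> 'e) \<Rightarrow> nat \<Rightarrow> real \<Rightarrow> real \<Rightarrow> real" where
  "F1l M R X l u v = ((deriv ^^ l) (\<lambda>u'. F1 M R X u' v)) u"

definition L2norm :: "'a measure \<Rightarrow> ('a \<Rightarrow> real) \<Rightarrow> real" where
  "L2norm M V = sqrt (\<integral>\<omega>. (V \<omega>)\<^sup>2 \<partial>M)"

text \<open>e_i = G(F_i) with F_i = (..., eps_{i-1}, eps_i), G reading the sequence backwards.\<close>
definition eproc :: "((nat \<Rightarrow> 'e) \<Rightarrow> real) \<Rightarrow> (int \<Rightarrow> 'a \<Rightarrow> 'e) \<Rightarrow> int \<Rightarrow> 'a \<Rightarrow> real" where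
  "eproc G eps i \<omega> = G (\<lambda>k. eps (i - int k) \<omega>)"

text \<open>e_i^* = G(F_i^*), eps_0 replaced by eps_0', for i \<ge> 0.\<close>
definition estar :: "((nat \<Rightarrow> 'e) \<Rightarrow> real) \<Rightarrow> (int \<Rightarrow> 'a \<Rightarrow> 'e) \<Rightarrow> ('a \<Rightarrow> 'e) \<Rightarrow> nat \<Rightarrow> 'a \<Rightarrow> real" where
  "estar G eps eps' i \<omega> =
     G (\<lambda>k. if int i - int k = 0 then eps' \<omega> else eps (int i - int k) \<omega>)"

definition omega_l ::
  "'a measure \<Rightarrow> (real \<Rightarrow> 'e \<Rightarrow> real) \<Rightarrow> ((nat \<Rightarrow> 'e) \<Rightarrow> real) \<Rightarrow> (int \<Rightarrow> 'a \<Rightarrow> 'e)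
     \<Rightarrow> ('a \<Rightarrow> 'e) \<Rightarrow> nat \<Rightarrow> nat \<Rightarrow> real" where
  "omega_l M R G eps eps' l i =
     (SUP u. L2norm M (\<lambda>\<omega>. F1l M R (eps 0) l u (eproc G eps (int i) \<omega>)
                            - F1l M R (eps 0) l u (estar G eps eps' i \<omega>)))"

end

theory Submission
  imports Defs
begin

locale P5 = prob_space M for M :: "'a measure" +
  fixes N :: "'e measure" and eps :: "int \<Rightarrow> 'a \<Rightarrow> 'e" and eps' :: "'a \<Rightarrow> 'e"
    and R :: "real \<Rightarrow> 'e \<Rightarrow> real" and G :: "(nat \<Rightarrow> 'e) \<Rightarrow> real" and q t0 :: real
  assumes indep: "indep_vars (\<lambda>_. N)
                  (\<lambda>j. case j of None \<Rightarrow> eps' | Some i \<Rightarrow> eps i) (UNIV :: int option set)"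
    and ident: "\<And>i. distr M N (eps i) = distr M N (eps 0)"
    and ident': "distr M N eps' = distr M N (eps 0)"
    and R_meas: "(\<lambda>(x, z). R x z) \<in> borel_measurable (borel \<Otimes>\<^sub>M N)"
    and q: "q > 0"
    and lip_fin: "AE \<omega> in M. lipR R (eps 0 \<omega>) < \<infinity>"
    and Lq: "integrable M (\<lambda>\<omega>. (enn2real (lipR R (eps 0 \<omega>)) + \<bar>R t0 (eps 0 \<omega>)\<bar>) powr q)"
    and Elog: "(\<integral>\<^sup>+ \<omega>. log_pos (lipR R (eps 0 \<omega>)) \<partial>M)
                 < (\<integral>\<^sup>+ \<omega>. log_neg (lipR R (eps 0 \<omega>)) \<partial>M)"
    and G_meas: "G \<in> borel_measurable (Pi\<^sub>M UNIV (\<lambda>_. N))"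
    and stationary: "\<And>i. AE \<omega> in M. eproc G eps i \<omega> = R (eproc G eps (i - 1) \<omega>) (eps i \<omega>)"
begin

definition X :: "int option \<Rightarrow> 'a \<Rightarrow> 'e" where
  "X j = (case j of None \<Rightarrow> eps' | Some i \<Rightarrow> eps i)"

definition mu :: "'e measure" where "mu = distr M N (eps 0)"

lemma X_simps[simp]: "X None = eps'" "X (Some i) = eps i"
  by (simp_all add: X_def)

lemma indepX: "indep_vars (\<lambda>_. N) X UNIV"
  using indep unfolding X_def[abs_def] .

lemma X_meas[measurable]: "X j \<in> measurable M N"
  using indepX unfolding indep_vars_def by auto

lemma eps_meas[measurable]: "eps i \<in> measurable M N"
  using X_meas[of "Some i"] by simp

lemma eps'_meas[measurable]: "eps' \<in> measurable M N"
  using X_meas[of None] by simp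

lemma distr_X: "distr M N (X j) = mu"
proof (cases j)
  case None
  then show ?thesis unfolding mu_def by (simp add: ident')
next
  case (Some i)
  then show ?thesis unfolding mu_def using ident[of i] by simp
qed

lemma prob_mu: "prob_space mu"
  unfolding mu_def by (rule prob_space_distr) simp

lemma sets_mu[simp]: "sets mu = sets N" and space_mu[simp]: "space mu = space N"
  by (simp_all add: mu_def)

lemma R_meas'[measurable]:
  assumes [measurable]: "f \<in> borel_measurable K" "g \<in> measurable K N"
  shows "(\<lambda>x. R (f x) (g x)) \<in> borel_measurable K"
proof -
  have "(\<lambda>x. (\<lambda>(x, z). R x z) (f x, g x)) \<in> borel_measurable K"
    using R_meas by measurable
  then show ?thesis by simp
qed

lemma G_meas'[measurable]:
  assumes "f \<in> measurable K (Pi\<^sub>M UNIV (\<lambda>_. N))"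
  shows "(\<lambda>x. G (f x)) \<in> borel_measurable K"
  using measurable_compose[OF assms G_meas] by (simp add: comp_def)

lemma Xall_meas: "(\<lambda>\<omega> j. X j \<omega>) \<in> measurable M (Pi\<^sub>M UNIV (\<lambda>_. N))"
  by (rule measurable_PiM_single') (auto simp: measurable_space[OF X_meas])

lemma lawX: "distr M (Pi\<^sub>M UNIV (\<lambda>_. N)) (\<lambda>\<omega> j. X j \<omega>) = Pi\<^sub>M UNIV (\<lambda>_. mu)"
  using indep_vars_iff_distr_eq_PiM[where I=UNIV and M'="\<lambda>_. N" and X=X] indepX
  by (simp add: distr_X restrict_UNIV)

lemma reindex_meas:
  "(\<lambda>x k. x (\<sigma> k)) \<in> measurable (Pi\<^sub>M UNIV (\<lambda>_. N)) (Pi\<^sub>M UNIV (\<lambda>_. N))"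
  by (rule measurable_PiM_single') (auto simp: space_PiM)

lemma law_reindex:
  fixes \<sigma> :: "nat \<Rightarrow> int option"
  assumes "inj \<sigma>"
  shows "distr M (Pi\<^sub>M UNIV (\<lambda>_. N)) (\<lambda>\<omega> k. X (\<sigma> k) \<omega>) = Pi\<^sub>M UNIV (\<lambda>_. mu)"
proof -
  interpret mu: prob_space mu by (rule prob_mu)
  have "distr M (Pi\<^sub>M UNIV (\<lambda>_. N)) (\<lambda>\<omega> k. X (\<sigma> k) \<omega>)
      = distr (distr M (Pi\<^sub>M UNIV (\<lambda>_. N)) (\<lambda>\<omega> j. X j \<omega>)) (Pi\<^sub>M UNIV (\<lambda>_. N)) (\<lambda>x k. x (\<sigma> k))"
    by (subst distr_distr[OF reindex_meas Xall_meas]) (simp add: comp_def)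
  also have "\<dots> = distr (Pi\<^sub>M UNIV (\<lambda>_. mu)) (Pi\<^sub>M UNIV (\<lambda>_. mu)) (\<lambda>x. \<lambda>n\<in>UNIV. x (\<sigma> n))"
    unfolding lawX by (intro distr_cong sets_PiM_cong) auto
  also have "\<dots> = Pi\<^sub>M UNIV (\<lambda>_. mu)"
    using distr_PiM_reindex[of UNIV "\<lambda>_. mu" \<sigma> UNIV] assms prob_mu by simp
  finally show ?thesis .
qed

definition QP :: "(real \<times> real) set" where
  "QP = {xx'. fst xx' \<in> \<rat> \<and> snd xx' \<in> \<rat> \<and> fst xx' \<noteq> snd xx'}"

definition lr :: "'e \<Rightarrow> real" where
  "lr z = enn2real (SUP xx' \<in> QP. ennreal (\<bar>R (fst xx') z - R (snd xx') z\<bar> / \<bar>fst xx' - snd xx'\<bar>))"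

lemma countable_QP: "countable QP"
proof -
  have "QP \<subseteq> \<rat> \<times> \<rat>" by (auto simp: QP_def)
  moreover have "countable (\<rat> \<times> \<rat> :: (real \<times> real) set)"
    by (intro countable_SIGMA countable_rat)
  ultimately show ?thesis by (rule countable_subset)
qed

lemma lr_meas[measurable]: "lr \<in> borel_measurable N"
  unfolding lr_def
  by (intro borel_measurable_enn2real borel_measurable_SUP countable_QP) measurable

lemma lr_nonneg[simp]: "0 \<le> lr z"
  by (simp add: lr_def)

lemma lip_bound:
  assumes "lipR R z < \<infinity>"
  shows "\<bar>R a z - R b z\<bar> \<le> enn2real (lipR R z) * \<bar>a - b\<bar>"
proof (cases "a = b")
  case False
  have "ennreal (\<bar>R a z - R b z\<bar> / \<bar>a - b\<bar>) \<le> lipR R z"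
    unfolding lipR_def using False by (intro SUP_upper2[of "(a, b)"]) auto
  then have "enn2real (ennreal (\<bar>R a z - R b z\<bar> / \<bar>a - b\<bar>)) \<le> enn2real (lipR R z)"
    using assms by (intro enn2real_mono) auto
  then have "\<bar>R a z - R b z\<bar> / \<bar>a - b\<bar> \<le> enn2real (lipR R z)" by simp
  then show ?thesis using False by (simp add: field_simps)
qed simp

lemma lr_le_lip:
  assumes "lipR R z < \<infinity>"
  shows "lr z \<le> enn2real (lipR R z)"
proof -
  have "(SUP xx' \<in> QP. ennreal (\<bar>R (fst xx') z - R (snd xx') z\<bar> / \<bar>fst xx' - snd xx'\<bar>)) \<le> lipR R z"
    unfolding lipR_def by (rule SUP_subset_mono) (auto simp: QP_def)
  then show ?thesis unfolding lr_def using assms by (intro enn2real_mono) auto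
qed

lemma lr_bound_rat:
  assumes "lipR R z < \<infinity>" "a \<in> \<rat>" "b \<in> \<rat>"
  shows "\<bar>R a z - R b z\<bar> \<le> lr z * \<bar>a - b\<bar>"
proof (cases "a = b")
  case False
  have fin: "(SUP xx' \<in> QP. ennreal (\<bar>R (fst xx') z - R (snd xx') z\<bar> / \<bar>fst xx' - snd xx'\<bar>)) < \<infinity>"
  proof -
    have "(SUP xx' \<in> QP. ennreal (\<bar>R (fst xx') z - R (snd xx') z\<bar> / \<bar>fst xx' - snd xx'\<bar>)) \<le> lipR R z"
      unfolding lipR_def by (rule SUP_subset_mono) (auto simp: QP_def)
    then show ?thesis using assms(1) by (simp add: order_le_less_trans)
  qed
  have "ennreal (\<bar>R a z - R b z\<bar> / \<bar>a - b\<bar>)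
     \<le> (SUP xx' \<in> QP. ennreal (\<bar>R (fst xx') z - R (snd xx') z\<bar> / \<bar>fst xx' - snd xx'\<bar>))"
    using False assms by (intro SUP_upper2[of "(a, b)"]) (auto simp: QP_def)
  then have "enn2real (ennreal (\<bar>R a z - R b z\<bar> / \<bar>a - b\<bar>)) \<le> lr z"
    unfolding lr_def using fin by (intro enn2real_mono) auto
  then have "\<bar>R a z - R b z\<bar> / \<bar>a - b\<bar> \<le> lr z" by simp
  then show ?thesis using False by (simp add: field_simps)
qed simp

lemma lr_bound:
  assumes fin: "lipR R z < \<infinity>"
  shows "\<bar>R a z - R b z\<bar> \<le> lr z * \<bar>a - b\<bar>"
proof (rule field_le_epsilon)
  fix e :: real assume e: "0 < e"
  define K where "K = enn2real (lipR R z)"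
  have K0: "0 \<le> K" by (simp add: K_def)
  define d where "d = e / (2 * K + 2 * lr z + 1)"
  have pos: "0 < 2 * K + 2 * lr z + 1" using K0 lr_nonneg[of z] by linarith
  then have dpos: "0 < d" using e by (simp add: d_def)
  obtain a' where a': "a' \<in> \<rat>" "a - d < a'" "a' < a + d"
    using Rats_dense_in_real[of "a - d" "a + d"] dpos by auto
  obtain b' where b': "b' \<in> \<rat>" "b - d < b'" "b' < b + d"
    using Rats_dense_in_real[of "b - d" "b + d"] dpos by auto
  have 1: "\<bar>R a z - R a' z\<bar> \<le> K * d"
    using lip_bound[OF fin, of a a'] a' K0 unfolding K_def[symmetric]
    by (smt (verit, best) mult_left_mono)
  have 2: "\<bar>R b' z - R b z\<bar> \<le> K * d"
    using lip_bound[OF fin, of b' b] b' K0 unfolding K_def[symmetric]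
    by (smt (verit, best) mult_left_mono)
  have 3: "\<bar>R a' z - R b' z\<bar> \<le> lr z * (\<bar>a - b\<bar> + 2 * d)"
  proof -
    have "\<bar>R a' z - R b' z\<bar> \<le> lr z * \<bar>a' - b'\<bar>" by (rule lr_bound_rat[OF fin a'(1) b'(1)])
    also have "\<dots> \<le> lr z * (\<bar>a - b\<bar> + 2 * d)"
      using a' b' by (intro mult_left_mono) auto
    finally show ?thesis .
  qed
  have "\<bar>R a z - R b z\<bar> \<le> \<bar>R a z - R a' z\<bar> + \<bar>R a' z - R b' z\<bar> + \<bar>R b' z - R b z\<bar>"
    by linarith
  also have "\<dots> \<le> lr z * \<bar>a - b\<bar> + (2 * K + 2 * lr z) * d"
    using 1 2 3 by (simp add: algebra_simps)
  also have "(2 * K + 2 * lr z) * d \<le> e"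
  proof -
    have "(2 * K + 2 * lr z) * d = e * ((2 * K + 2 * lr z) / (2 * K + 2 * lr z + 1))"
      by (simp add: d_def)
    also have "\<dots> \<le> e * 1"
    proof (rule mult_left_mono)
      show "(2 * K + 2 * lr z) / (2 * K + 2 * lr z + 1) \<le> 1"
        by (rule mult_imp_div_pos_le[OF pos]) simp
    qed (use e in simp)
    finally show ?thesis by simp
  qed
  finally show "\<bar>R a z - R b z\<bar> \<le> lr z * \<bar>a - b\<bar> + e" by simp
qed

end

context P5 begin

lemma mu_bad_null:
  "emeasure mu {z \<in> space N. \<not> \<bar>R a z - R b z\<bar> \<le> lr z * \<bar>a - b\<bar>} = 0"
proof -
  let ?S = "{z \<in> space N. \<not> \<bar>R a z - R b z\<bar> \<le> lr z * \<bar>a - b\<bar>}"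
  let ?T = "{x \<in> space M. \<not> \<bar>R a (eps 0 x) - R b (eps 0 x)\<bar> \<le> lr (eps 0 x) * \<bar>a - b\<bar>}"
  have S: "?S \<in> sets N" by measurable
  have T: "?T \<in> sets M" by measurable
  have "emeasure mu ?S = emeasure M (eps 0 -` ?S \<inter> space M)"
    unfolding mu_def by (rule emeasure_distr[OF eps_meas S])
  also have "eps 0 -` ?S \<inter> space M = ?T"
    by (auto simp: measurable_space[OF eps_meas])
  also have "emeasure M ?T = 0"
  proof -
    have "AE \<omega> in M. \<bar>R a (eps 0 \<omega>) - R b (eps 0 \<omega>)\<bar> \<le> lr (eps 0 \<omega>) * \<bar>a - b\<bar>"
      using lip_fin by eventually_elim (rule lr_bound)
    then show ?thesis by (rule AE_iff_measurable[OF T refl, THEN iffD1])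
  qed
  finally show ?thesis .
qed

lemma lip_AE:
  fixes fa fb :: "(int option \<Rightarrow> 'e) \<Rightarrow> real"
  assumes kB: "Some k \<notin> B" and fm[measurable]: "fa \<in> borel_measurable (Pi\<^sub>M B (\<lambda>_. N))"
     "fb \<in> borel_measurable (Pi\<^sub>M B (\<lambda>_. N))"
  shows "AE \<omega> in M. \<bar>R (fa (\<lambda>i\<in>B. X i \<omega>)) (eps k \<omega>) - R (fb (\<lambda>i\<in>B. X i \<omega>)) (eps k \<omega>)\<bar>
                     \<le> lr (eps k \<omega>) * \<bar>fa (\<lambda>i\<in>B. X i \<omega>) - fb (\<lambda>i\<in>B. X i \<omega>)\<bar>"
proof -
  let ?PB = "Pi\<^sub>M B (\<lambda>_. N)" and ?PK = "Pi\<^sub>M {Some k} (\<lambda>_. N)"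
  let ?YB = "\<lambda>\<omega>. \<lambda>i\<in>B. X i \<omega>" and ?YK = "\<lambda>\<omega>. \<lambda>i\<in>{Some k}. X i \<omega>"
  have ind: "indep_var ?PB ?YB ?PK ?YK"
    using kB by (intro indep_var_restrict[OF indepX]) auto
  have YB[measurable]: "?YB \<in> measurable M ?PB" using indep_var_rv1[OF ind] .
  have YK[measurable]: "?YK \<in> measurable M ?PK" using indep_var_rv2[OF ind] .
  interpret K: prob_space "distr M ?PK ?YK" by (rule prob_space_distr) simp
  define Bad where "Bad = {yy \<in> space (?PB \<Otimes>\<^sub>M ?PK).
     \<not> \<bar>R (fa (fst yy)) (snd yy (Some k)) - R (fb (fst yy)) (snd yy (Some k))\<bar>
        \<le> lr (snd yy (Some k)) * \<bar>fa (fst yy) - fb (fst yy)\<bar>}"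
  have m1[measurable]: "(\<lambda>yy. snd yy (Some k)) \<in> measurable (?PB \<Otimes>\<^sub>M ?PK) N"
    by (rule measurable_compose[OF measurable_snd measurable_component_singleton]) simp
  have m2[measurable]: "(\<lambda>yy. fa (fst yy)) \<in> borel_measurable (?PB \<Otimes>\<^sub>M ?PK)"
    "(\<lambda>yy. fb (fst yy)) \<in> borel_measurable (?PB \<Otimes>\<^sub>M ?PK)"
    by measurable
  have Bad[measurable]: "Bad \<in> sets (?PB \<Otimes>\<^sub>M ?PK)" unfolding Bad_def by measurable
  have inner: "emeasure (distr M ?PK ?YK) (Pair y -` Bad) = 0" if y: "y \<in> space ?PB" for y
  proof -
    define a where "a = fa y"
    define b where "b = fb y"
    have "Pair y -` Bad = {y' \<in> space ?PK. \<not> \<bar>R a (y' (Some k)) - R b (y' (Some k))\<bar> \<le> lr (y' (Some k)) * \<bar>a - b\<bar>}"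
      using y by (auto simp: Bad_def space_pair_measure a_def b_def)
    then have "emeasure (distr M ?PK ?YK) (Pair y -` Bad) =
       emeasure M (?YK -` {y' \<in> space ?PK. \<not> \<bar>R a (y' (Some k)) - R b (y' (Some k))\<bar> \<le> lr (y' (Some k)) * \<bar>a - b\<bar>} \<inter> space M)"
      by (simp add: emeasure_distr)
    also have "?YK -` {y' \<in> space ?PK. \<not> \<bar>R a (y' (Some k)) - R b (y' (Some k))\<bar> \<le> lr (y' (Some k)) * \<bar>a - b\<bar>} \<inter> space M
       = eps k -` {z \<in> space N. \<not> \<bar>R a z - R b z\<bar> \<le> lr z * \<bar>a - b\<bar>} \<inter> space M"
      using measurable_space[OF YK] by (auto simp: measurable_space[OF eps_meas])
    also have "emeasure M \<dots> = emeasure (distr M N (eps k)) {z \<in> space N. \<not> \<bar>R a z - R b z\<bar> \<le> lr z * \<bar>a - b\<bar>}"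
      by (simp add: emeasure_distr)
    also have "\<dots> = 0" using mu_bad_null unfolding mu_def by (subst ident[of k])
    finally show ?thesis .
  qed
  have joint: "distr M (?PB \<Otimes>\<^sub>M ?PK) (\<lambda>\<omega>. (?YB \<omega>, ?YK \<omega>)) = distr M ?PB ?YB \<Otimes>\<^sub>M distr M ?PK ?YK"
    using ind unfolding indep_var_distribution_eq by simp
  have "emeasure M ((\<lambda>\<omega>. (?YB \<omega>, ?YK \<omega>)) -` Bad \<inter> space M) = emeasure (distr M ?PB ?YB \<Otimes>\<^sub>M distr M ?PK ?YK) Bad"
    by (subst joint[symmetric]) (simp add: emeasure_distr)
  also have "\<dots> = (\<integral>\<^sup>+y. emeasure (distr M ?PK ?YK) (Pair y -` Bad) \<partial>distr M ?PB ?YB)"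
    by (rule K.emeasure_pair_measure_alt) simp
  also have "\<dots> = (\<integral>\<^sup>+y. 0 \<partial>distr M ?PB ?YB)"
    by (rule nn_integral_cong) (simp add: inner)
  also have "\<dots> = 0" by simp
  finally have 0: "emeasure M ((\<lambda>\<omega>. (?YB \<omega>, ?YK \<omega>)) -` Bad \<inter> space M) = 0" .
  have S: "(\<lambda>\<omega>. (?YB \<omega>, ?YK \<omega>)) -` Bad \<inter> space M \<in> sets M"
    by (rule measurable_sets[OF _ Bad]) simp
  have sub: "{x\<in>space M. \<not> (\<bar>R (fa (\<lambda>i\<in>B. X i x)) (eps k x) - R (fb (\<lambda>i\<in>B. X i x)) (eps k x)\<bar>
                     \<le> lr (eps k x) * \<bar>fa (\<lambda>i\<in>B. X i x) - fb (\<lambda>i\<in>B. X i x)\<bar>)}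
      \<subseteq> (\<lambda>\<omega>. (?YB \<omega>, ?YK \<omega>)) -` Bad \<inter> space M"
  proof (rule subsetI)
    fix x assume "x \<in> {x\<in>space M. \<not> (\<bar>R (fa (\<lambda>i\<in>B. X i x)) (eps k x) - R (fb (\<lambda>i\<in>B. X i x)) (eps k x)\<bar>
                     \<le> lr (eps k x) * \<bar>fa (\<lambda>i\<in>B. X i x) - fb (\<lambda>i\<in>B. X i x)\<bar>)}"
    then have x: "x \<in> space M" and
      nP: "\<not> \<bar>R (fa (\<lambda>i\<in>B. X i x)) (eps k x) - R (fb (\<lambda>i\<in>B. X i x)) (eps k x)\<bar>
                     \<le> lr (eps k x) * \<bar>fa (\<lambda>i\<in>B. X i x) - fb (\<lambda>i\<in>B. X i x)\<bar>"
      by blast+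
    have sp: "(?YB x, ?YK x) \<in> space (?PB \<Otimes>\<^sub>M ?PK)"
      using measurable_space[OF YB x] measurable_space[OF YK x] by (simp only: space_pair_measure SigmaI)
    have e1: "?YK x (Some k) = eps k x" by simp
    have "(?YB x, ?YK x) \<in> Bad"
      unfolding Bad_def mem_Collect_eq fst_conv snd_conv e1 using sp nP by blast
    then show "x \<in> (\<lambda>\<omega>. (?YB \<omega>, ?YK \<omega>)) -` Bad \<inter> space M" using x by blast
  qed
  show ?thesis
    apply (rule AE_I')
     apply (rule null_setsI[OF 0 S])
    apply (rule sub)
    done
qed

end

context P5 begin

definition sig :: "int \<Rightarrow> nat \<Rightarrow> int option" where
  "sig i k = Some (i - int k)"
definition sigs :: "nat \<Rightarrow> nat \<Rightarrow> int option" where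
  "sigs i k = (if int i - int k = 0 then None else Some (int i - int k))"

lemma eproc_X: "eproc G eps i \<omega> = G (\<lambda>k. X (sig i k) \<omega>)"
  by (simp add: eproc_def sig_def)

lemma estar_X: "estar G eps eps' i \<omega> = G (\<lambda>k. X (sigs i k) \<omega>)"
  unfolding estar_def sigs_def by (intro arg_cong[where f=G] ext) simp

lemma eproc_fun: "eproc G eps i = (\<lambda>\<omega>. G (\<lambda>k. X (sig i k) \<omega>))"
  by (simp add: fun_eq_iff eproc_X)

lemma estar_fun: "estar G eps eps' i = (\<lambda>\<omega>. G (\<lambda>k. X (sigs i k) \<omega>))"
  by (simp add: fun_eq_iff estar_X)

lemma inj_sig: "inj (sig i)"
  by (auto simp: inj_def sig_def)

lemma inj_sigs: "inj (sigs i)"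
  by (auto simp: inj_def sigs_def split: if_splits)

lemma seq_meas: "(\<lambda>\<omega> k. X (\<sigma> k) \<omega>) \<in> measurable M (Pi\<^sub>M UNIV (\<lambda>_. N))"
  by (rule measurable_PiM_single') (auto simp: measurable_space[OF X_meas])

lemma e_meas[measurable]: "eproc G eps i \<in> borel_measurable M"
  unfolding eproc_fun by (rule G_meas'[OF seq_meas])

lemma es_meas[measurable]: "estar G eps eps' i \<in> borel_measurable M"
  unfolding estar_fun by (rule G_meas'[OF seq_meas])

definition nu :: "real measure" where
  "nu = distr (Pi\<^sub>M UNIV (\<lambda>_. mu)) borel G"

lemma law_G:
  assumes "inj \<sigma>"
  shows "distr M borel (\<lambda>\<omega>. G (\<lambda>k. X (\<sigma> k) \<omega>)) = nu"
proof -
  have "distr M borel (\<lambda>\<omega>. G (\<lambda>k. X (\<sigma> k) \<omega>)) =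
        distr (distr M (Pi\<^sub>M UNIV (\<lambda>_. N)) (\<lambda>\<omega> k. X (\<sigma> k) \<omega>)) borel G"
    by (subst distr_distr[OF G_meas seq_meas]) (simp add: comp_def)
  also have "\<dots> = nu" unfolding law_reindex[OF assms] nu_def ..
  finally show ?thesis .
qed

lemma e_law: "distr M borel (eproc G eps i) = nu"
  unfolding eproc_fun by (rule law_G[OF inj_sig])

lemma es_law: "distr M borel (estar G eps eps' i) = nu"
  unfolding estar_fun by (rule law_G[OF inj_sigs])

lemma es_rec:
  assumes i: "1 \<le> i"
  shows "AE \<omega> in M. estar G eps eps' i \<omega> = R (estar G eps eps' (i - 1) \<omega>) (eps (int i) \<omega>)"
proof -
  let ?P = "Pi\<^sub>M UNIV (\<lambda>_::nat. N)"
  define Good where "Good = {x \<in> space ?P. G x = R (G (\<lambda>k. x (Suc k))) (x 0)}"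
  have m0[measurable]: "(\<lambda>x. x 0) \<in> measurable ?P N"
    by (rule measurable_component_singleton) simp
  have m1[measurable]: "(\<lambda>x. G (\<lambda>k. x (Suc k))) \<in> borel_measurable ?P"
    by (rule G_meas'[OF reindex_meas])
  have Gm[measurable]: "G \<in> borel_measurable ?P" by (rule G_meas)
  have Good[measurable]: "Good \<in> sets ?P" unfolding Good_def by measurable
  have Good': "{x \<in> space ?P. x \<in> Good} \<in> sets ?P" using Good by (simp add: Good_def)
  have "AE \<omega> in M. (\<lambda>k. X (sig (int i) k) \<omega>) \<in> Good"
    using stationary[of "int i"] AE_space
  proof eventually_elim
    case (elim \<omega>)
    have "(\<lambda>k. X (sig (int i) k) \<omega>) \<in> space ?P"
      using measurable_space[OF seq_meas elim(2)] .
    moreover have "eproc G eps (int i - 1) \<omega> = G (\<lambda>k. X (sig (int i) (Suc k)) \<omega>)"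
      unfolding eproc_X by (intro arg_cong[where f=G] ext) (simp add: sig_def algebra_simps)
    ultimately show ?case using elim(1) unfolding Good_def eproc_X by (simp add: sig_def)
  qed
  then have "AE x in distr M ?P (\<lambda>\<omega> k. X (sig (int i) k) \<omega>). x \<in> Good"
    by (subst AE_distr_iff[OF seq_meas Good'])
  then have "AE x in distr M ?P (\<lambda>\<omega> k. X (sigs i k) \<omega>). x \<in> Good"
    unfolding law_reindex[OF inj_sig] law_reindex[OF inj_sigs] .
  then have "AE \<omega> in M. (\<lambda>k. X (sigs i k) \<omega>) \<in> Good"
    by (subst (asm) AE_distr_iff[OF seq_meas Good'])
  then show ?thesis
  proof eventually_elim
    case (elim \<omega>)
    have 1: "(\<lambda>k. X (sigs i (Suc k)) \<omega>) = (\<lambda>k. X (sigs (i - 1) k) \<omega>)"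
      using i by (intro ext) (simp add: sigs_def of_nat_diff algebra_simps)
    have 2: "X (sigs i 0) \<omega> = eps (int i) \<omega>" using i by (simp add: sigs_def)
    show ?case using elim unfolding Good_def estar_X 1[symmetric] 2[symmetric] by simp
  qed
qed

lemma restrict_G_meas:
  assumes "range \<sigma> \<subseteq> B"
  shows "(\<lambda>y. G (\<lambda>m. y (\<sigma> m))) \<in> borel_measurable (Pi\<^sub>M B (\<lambda>_. N))"
proof (rule G_meas')
  show "(\<lambda>y m. y (\<sigma> m)) \<in> measurable (Pi\<^sub>M B (\<lambda>_. N)) (Pi\<^sub>M UNIV (\<lambda>_. N))"
  proof (rule measurable_PiM_single')
    fix m show "(\<lambda>y. y (\<sigma> m)) \<in> measurable (Pi\<^sub>M B (\<lambda>_. N)) N"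
      using assms by (intro measurable_component_singleton) auto
  next
    show "(\<lambda>y m. y (\<sigma> m)) \<in> space (Pi\<^sub>M B (\<lambda>_. N)) \<rightarrow> (UNIV \<rightarrow>\<^sub>E space N)"
      using assms by (auto simp: space_PiM PiE_iff)
  qed
qed

lemma restrict_eval:
  assumes "range \<sigma> \<subseteq> B"
  shows "(\<lambda>m. (\<lambda>j\<in>B. X j \<omega>) (\<sigma> m)) = (\<lambda>m. X (\<sigma> m) \<omega>)"
  using assms by (intro ext) auto

lemma chain_step:
  assumes i: "1 \<le> i"
  shows "AE \<omega> in M. \<bar>eproc G eps (int i) \<omega> - estar G eps eps' i \<omega>\<bar>
     \<le> lr (eps (int i) \<omega>) * \<bar>eproc G eps (int (i - 1)) \<omega> - estar G eps eps' (i - 1) \<omega>\<bar>"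
proof -
  define B where "B = range (sig (int i - 1)) \<union> range (sigs (i - 1))"
  have r1: "range (sig (int i - 1)) \<subseteq> B" and r2: "range (sigs (i - 1)) \<subseteq> B"
    by (auto simp: B_def)
  have kB: "Some (int i) \<notin> B"
    using i by (auto simp: B_def sig_def sigs_def of_nat_diff split: if_splits)
  have L: "AE \<omega> in M. \<bar>R ((\<lambda>y. G (\<lambda>m. y (sig (int i - 1) m))) (\<lambda>j\<in>B. X j \<omega>)) (eps (int i) \<omega>)
        - R ((\<lambda>y. G (\<lambda>m. y (sigs (i - 1) m))) (\<lambda>j\<in>B. X j \<omega>)) (eps (int i) \<omega>)\<bar>
     \<le> lr (eps (int i) \<omega>) * \<bar>(\<lambda>y. G (\<lambda>m. y (sig (int i - 1) m))) (\<lambda>j\<in>B. X j \<omega>)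
        - (\<lambda>y. G (\<lambda>m. y (sigs (i - 1) m))) (\<lambda>j\<in>B. X j \<omega>)\<bar>"
    by (rule lip_AE[OF kB restrict_G_meas[OF r1] restrict_G_meas[OF r2]])
  have e1: "G (\<lambda>m. (\<lambda>j\<in>B. X j \<omega>) (sig (int i - 1) m)) = eproc G eps (int (i - 1)) \<omega>" for \<omega>
    unfolding restrict_eval[OF r1] eproc_X using i by (simp add: of_nat_diff)
  have e2: "G (\<lambda>m. (\<lambda>j\<in>B. X j \<omega>) (sigs (i - 1) m)) = estar G eps eps' (i - 1) \<omega>" for \<omega>
    unfolding restrict_eval[OF r2] estar_X ..
  have st: "AE \<omega> in M. eproc G eps (int i) \<omega> = R (eproc G eps (int (i - 1)) \<omega>) (eps (int i) \<omega>)"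
    using stationary[of "int i"] using i by (simp add: of_nat_diff)
  from L st es_rec[OF i] show ?thesis
  proof eventually_elim
    case (elim \<omega>)
    then show ?case unfolding e1 e2 by simp
  qed
qed

lemma mom_step:
  "AE \<omega> in M. \<bar>eproc G eps (- int j) \<omega> - t0\<bar>
     \<le> lr (eps (- int j) \<omega>) * \<bar>eproc G eps (- int j - 1) \<omega> - t0\<bar> + \<bar>R t0 (eps (- int j) \<omega>) - t0\<bar>"
proof -
  define B where "B = range (sig (- int j - 1))"
  have r1: "range (sig (- int j - 1)) \<subseteq> B" by (simp add: B_def)
  have kB: "Some (- int j) \<notin> B"
    by (auto simp: B_def sig_def)
  have L: "AE \<omega> in M. \<bar>R ((\<lambda>y. G (\<lambda>m. y (sig (- int j - 1) m))) (\<lambda>j\<in>B. X j \<omega>)) (eps (- int j) \<omega>)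
        - R ((\<lambda>y. t0) (\<lambda>j\<in>B. X j \<omega>)) (eps (- int j) \<omega>)\<bar>
     \<le> lr (eps (- int j) \<omega>) * \<bar>(\<lambda>y. G (\<lambda>m. y (sig (- int j - 1) m))) (\<lambda>j\<in>B. X j \<omega>)
        - (\<lambda>y. t0) (\<lambda>j\<in>B. X j \<omega>)\<bar>"
    by (rule lip_AE[OF kB restrict_G_meas[OF r1]]) simp
  have e1: "G (\<lambda>m. (\<lambda>j\<in>B. X j \<omega>) (sig (- int j - 1) m)) = eproc G eps (- int j - 1) \<omega>" for \<omega>
    unfolding restrict_eval[OF r1] eproc_X ..
  from L stationary[of "- int j"] show ?thesis
  proof eventually_elim
    case (elim \<omega>)
    have "\<bar>eproc G eps (- int j) \<omega> - t0\<bar>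
       \<le> \<bar>R (eproc G eps (- int j - 1) \<omega>) (eps (- int j) \<omega>) - R t0 (eps (- int j) \<omega>)\<bar> + \<bar>R t0 (eps (- int j) \<omega>) - t0\<bar>"
      using elim(2) by simp
    also have "\<dots> \<le> lr (eps (- int j) \<omega>) * \<bar>eproc G eps (- int j - 1) \<omega> - t0\<bar> + \<bar>R t0 (eps (- int j) \<omega>) - t0\<bar>"
      using elim(1) unfolding e1 by simp
    finally show ?case .
  qed
qed

end

definition gfun :: "real \<Rightarrow> real \<Rightarrow> real" where
  "gfun \<alpha> x = (x powr \<alpha> - 1) / \<alpha>"

lemma ennreal_max0: "ennreal (max 0 x) = ennreal x"
  by (cases "x \<le> 0") (auto simp: ennreal_neg max_def)

lemma g_mono:
  assumes x: "0 \<le> x" and a: "0 < \<alpha>" "\<alpha> \<le> \<beta>"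
  shows "gfun \<alpha> x \<le> gfun \<beta> x"
proof (cases "x = 0")
  case True
  have "1 / \<beta> \<le> 1 / \<alpha>" using a by (intro divide_left_mono) auto
  then show ?thesis using True a by (simp add: gfun_def)
next
  case False
  then have xp: "0 < x" using x by simp
  define t where "t = \<alpha> / \<beta>"
  have t: "0 \<le> t" "t \<le> 1" using a by (auto simp: t_def)
  have c: "exp ((1 - t) *\<^sub>R 0 + t *\<^sub>R (\<beta> * ln x)) \<le> (1 - t) * exp 0 + t * exp (\<beta> * ln x)"
    using convex_onD[OF exp_convex, of t 0 "\<beta> * ln x"] t by simp
  have teq: "(1 - t) *\<^sub>R 0 + t *\<^sub>R (\<beta> * ln x) = \<alpha> * ln x"
    using a by (simp add: t_def)
  have "exp (\<alpha> * ln x) \<le> (1 - t) + t * exp (\<beta> * ln x)"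
    using c unfolding teq by simp
  moreover have "x powr \<alpha> = exp (\<alpha> * ln x)" "x powr \<beta> = exp (\<beta> * ln x)"
    using xp by (simp_all add: powr_def)
  ultimately have "x powr \<alpha> \<le> (1 - t) + t * x powr \<beta>" by simp
  then have "x powr \<alpha> - 1 \<le> t * (x powr \<beta> - 1)" by (simp add: algebra_simps)
  then have "(x powr \<alpha> - 1) / \<alpha> \<le> t * (x powr \<beta> - 1) / \<alpha>"
    using a by (intro divide_right_mono) auto
  also have "t * (x powr \<beta> - 1) / \<alpha> = (x powr \<beta> - 1) / \<beta>"
    using a by (simp add: t_def)
  finally show ?thesis by (simp add: gfun_def)
qed

lemma g_ge_ln:
  assumes "0 < x" "0 < \<alpha>"
  shows "ln x \<le> gfun \<alpha> x"
proof -
  have "1 + \<alpha> * ln x \<le> exp (\<alpha> * ln x)" by (rule exp_ge_add_one_self)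
  moreover have "x powr \<alpha> = exp (\<alpha> * ln x)" using assms by (simp add: powr_def)
  ultimately have "\<alpha> * ln x \<le> x powr \<alpha> - 1" by linarith
  then show ?thesis using assms by (simp add: gfun_def pos_le_divide_eq mult.commute)
qed

lemma g_le:
  assumes "0 < x" "0 < \<alpha>"
  shows "gfun \<alpha> x \<le> ln x * x powr \<alpha>"
proof -
  define t where "t = \<alpha> * ln x"
  have "1 + (- t) \<le> exp (- t)" by (rule exp_ge_add_one_self)
  then have "(1 - t) * exp t \<le> exp (- t) * exp t"
    by (intro mult_right_mono) auto
  also have "exp (- t) * exp t = 1" by (simp add: mult_exp_exp)
  finally have "exp t - 1 \<le> t * exp t" by (simp add: algebra_simps)
  then have "x powr \<alpha> - 1 \<le> \<alpha> * (ln x * x powr \<alpha>)"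
    using assms by (simp add: powr_def t_def)
  then show ?thesis using assms by (simp add: gfun_def divide_le_eq mult.commute)
qed

lemma g_lim:
  assumes x: "0 < x" and b: "0 < \<beta>"
  shows "(\<lambda>n. gfun (\<beta> / real (Suc n)) x) \<longlonglongrightarrow> ln x"
proof (rule tendsto_sandwich)
  have A: "0 < \<beta> / real (Suc n)" for n using b by simp
  show "\<forall>\<^sub>F n in sequentially. ln x \<le> gfun (\<beta> / real (Suc n)) x"
    using g_ge_ln[OF x A] by simp
  show "\<forall>\<^sub>F n in sequentially. gfun (\<beta> / real (Suc n)) x \<le> ln x * x powr (\<beta> / real (Suc n))"
    using g_le[OF x A] by simp
  show "(\<lambda>n. ln x) \<longlonglongrightarrow> ln x" by simp
  have "(\<lambda>n. \<beta> / real (Suc n)) \<longlonglongrightarrow> 0"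
    using LIMSEQ_Suc[OF lim_const_over_n[of \<beta>]] by simp
  then have "(\<lambda>n. x powr (\<beta> / real (Suc n))) \<longlonglongrightarrow> x powr 0"
    using x by (intro tendsto_powr) auto
  then have "(\<lambda>n. ln x * x powr (\<beta> / real (Suc n))) \<longlonglongrightarrow> ln x * x powr 0"
    by (intro tendsto_mult tendsto_const)
  then show "(\<lambda>n. ln x * x powr (\<beta> / real (Suc n))) \<longlonglongrightarrow> ln x" using x by simp
qed

lemma alpha_exists:
  fixes a :: "'a \<Rightarrow> real"
  assumes PS: "prob_space M" and am[measurable]: "a \<in> borel_measurable M" and a0: "\<And>\<omega>. 0 \<le> a \<omega>"
    and b: "0 < \<beta>"
    and intg: "\<And>\<alpha>. 0 < \<alpha> \<Longrightarrow> \<alpha> \<le> \<beta> \<Longrightarrow> integrable M (\<lambda>\<omega>. a \<omega> powr \<alpha>)"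
    and lg: "(\<integral>\<^sup>+\<omega>. log_pos (ennreal (a \<omega>)) \<partial>M) < (\<integral>\<^sup>+\<omega>. log_neg (ennreal (a \<omega>)) \<partial>M)"
  shows "\<exists>\<alpha>. 0 < \<alpha> \<and> \<alpha> \<le> \<beta> \<and> (\<integral>\<omega>. a \<omega> powr \<alpha> \<partial>M) < 1"
proof (rule ccontr)
  assume H: "\<not> ?thesis"
  interpret prob_space M by (rule PS)
  define A where "A n = \<beta> / real (Suc n)" for n
  have Apos: "0 < A n" for n using b by (simp add: A_def)
  have Ale: "A n \<le> \<beta>" for n using b by (simp add: A_def divide_le_eq)
  have Adec: "A (Suc n) \<le> A n" for n using b by (simp add: A_def frac_le)
  define g where "g n \<omega> = gfun (A n) (a \<omega>)" for n \<omega>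
  have gm[measurable]: "g n \<in> borel_measurable M" for n
    unfolding g_def gfun_def by measurable
  have gint: "integrable M (g n)" for n
  proof -
    have "integrable M (\<lambda>\<omega>. (a \<omega> powr A n - 1) / A n)"
      using intg[OF Apos Ale] by (intro integrable_divide_zero integrable_diff) auto
    moreover have "g n = (\<lambda>\<omega>. (a \<omega> powr A n - 1) / A n)" by (simp add: fun_eq_iff g_def gfun_def)
    ultimately show ?thesis by simp
  qed
  have ge0: "0 \<le> (\<integral>\<omega>. g n \<omega> \<partial>M)" for n
  proof -
    have "1 \<le> (\<integral>\<omega>. a \<omega> powr A n \<partial>M)"
    proof (rule ccontr)
      assume "\<not> 1 \<le> (\<integral>\<omega>. a \<omega> powr A n \<partial>M)"
      then have "0 < A n \<and> A n \<le> \<beta> \<and> (\<integral>\<omega>. a \<omega> powr A n \<partial>M) < 1" using Apos[of n] Ale[of n] by simp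
      then show False using H by blast
    qed
    moreover have "(\<integral>\<omega>. g n \<omega> \<partial>M) = ((\<integral>\<omega>. a \<omega> powr A n \<partial>M) - 1) / A n"
      unfolding g_def gfun_def
      using intg[OF Apos Ale] by (simp add: integral_diff prob_space)
    ultimately show ?thesis using Apos[of n] by simp
  qed
  define P where "P n \<omega> = ennreal (g n \<omega>)" for n \<omega>
  define Q where "Q n \<omega> = ennreal (- g n \<omega>)" for n \<omega>
  have Pm[measurable]: "P n \<in> borel_measurable M" for n unfolding P_def by measurable
  have Qm[measurable]: "Q n \<in> borel_measurable M" for n unfolding Q_def by measurable
  have QleP: "(\<integral>\<^sup>+\<omega>. Q n \<omega> \<partial>M) \<le> (\<integral>\<^sup>+\<omega>. P n \<omega> \<partial>M)" for n
  proof -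
    have i1: "integrable M (\<lambda>\<omega>. max 0 (g n \<omega>))" by (rule integrable_max[OF integrable_zero gint])
    have i2: "integrable M (\<lambda>\<omega>. max 0 (- g n \<omega>))" by (rule integrable_max[OF integrable_zero integrable_minus[OF gint]])
    have eP: "(\<integral>\<^sup>+\<omega>. P n \<omega> \<partial>M) = ennreal (\<integral>\<omega>. max 0 (g n \<omega>) \<partial>M)"
      unfolding P_def using nn_integral_eq_integral[OF i1] by (simp add: ennreal_max0)
    have eQ: "(\<integral>\<^sup>+\<omega>. Q n \<omega> \<partial>M) = ennreal (\<integral>\<omega>. max 0 (- g n \<omega>) \<partial>M)"
      unfolding Q_def using nn_integral_eq_integral[OF i2] by (simp add: ennreal_max0)
    have "(\<integral>\<omega>. g n \<omega> \<partial>M) = (\<integral>\<omega>. max 0 (g n \<omega>) - max 0 (- g n \<omega>) \<partial>M)"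
      by (rule arg_cong[where f="integral\<^sup>L M"]) (auto simp: fun_eq_iff max_def)
    also have "\<dots> = (\<integral>\<omega>. max 0 (g n \<omega>) \<partial>M) - (\<integral>\<omega>. max 0 (- g n \<omega>) \<partial>M)"
      by (rule Bochner_Integration.integral_diff[OF i1 i2])
    finally have "(\<integral>\<omega>. max 0 (- g n \<omega>) \<partial>M) \<le> (\<integral>\<omega>. max 0 (g n \<omega>) \<partial>M)"
      using ge0[of n] by simp
    then show ?thesis unfolding eP eQ by (rule ennreal_leI)
  qed
  have gdec: "g (Suc n) \<omega> \<le> g n \<omega>" for n \<omega>
    unfolding g_def by (rule g_mono[OF a0 Apos Adec])
  have Aanti: "A n \<le> A m" if "m \<le> n" for m n
    using b that by (simp add: A_def frac_le)
  have gmono: "g n \<omega> \<le> g m \<omega>" if "m \<le> n" for m n \<omega>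
    unfolding g_def by (rule g_mono[OF a0 Apos Aanti[OF that]])
  have Pdec: "decseq P"
    by (intro decseq_SucI le_funI) (simp add: P_def ennreal_leI gdec)
  have Qinc: "incseq Q"
    by (intro incseq_SucI le_funI) (simp add: Q_def ennreal_leI gdec)
  have Pfin: "(\<integral>\<^sup>+\<omega>. P 0 \<omega> \<partial>M) < \<infinity>"
  proof -
    have "(\<integral>\<^sup>+\<omega>. P 0 \<omega> \<partial>M) \<le> (\<integral>\<^sup>+\<omega>. ennreal (norm (g 0 \<omega>)) \<partial>M)"
      unfolding P_def by (intro nn_integral_mono ennreal_leI) auto
    also have "\<dots> < \<infinity>" using gint[of 0] by (simp add: integrable_iff_bounded)
    finally show ?thesis .
  qed
  have Plim: "(INF n. P n \<omega>) = log_pos (ennreal (a \<omega>))" for \<omega>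
  proof -
    have L1: "(\<lambda>n. P n \<omega>) \<longlonglongrightarrow> (INF n. P n \<omega>)"
      by (rule LIMSEQ_INF, rule decseq_SucI) (simp add: P_def ennreal_leI gdec)
    have L2: "(\<lambda>n. P n \<omega>) \<longlonglongrightarrow> log_pos (ennreal (a \<omega>))"
    proof (cases "a \<omega> = 0")
      case True
      have "P n \<omega> = 0" for n
        using True Apos[of n] by (simp add: P_def g_def gfun_def ennreal_neg)
      then show ?thesis using True by (simp add: log_pos_def)
    next
      case False
      then have ap: "0 < a \<omega>" using a0[of \<omega>] by simp
      have "(\<lambda>n. ennreal (g n \<omega>)) \<longlonglongrightarrow> ennreal (ln (a \<omega>))"
        using g_lim[OF ap b] unfolding g_def A_def by (intro tendsto_ennrealI)
      then show ?thesis using ap by (simp add: P_def log_pos_def ennreal_max0)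
    qed
    show ?thesis using LIMSEQ_unique[OF L1 L2] .
  qed
  have Qlim: "(SUP n. Q n \<omega>) = log_neg (ennreal (a \<omega>))" for \<omega>
  proof (cases "a \<omega> = 0")
    case True
    have "(SUP n. Q n \<omega>) = \<top>"
    proof (rule ennreal_SUP_eq_top)
      fix m :: nat
      obtain i :: nat where i: "real m * \<beta> < real i" using reals_Archimedean2 by blast
      have "real m \<le> real (Suc i) / \<beta>"
        using i b by (simp add: le_divide_eq)
      moreover have "Q i \<omega> = ennreal (real (Suc i) / \<beta>)"
        using True b unfolding Q_def g_def gfun_def A_def by (simp add: field_simps)
      ultimately have "of_nat m \<le> Q i \<omega>"
        by (simp add: ennreal_of_nat_eq_real_of_nat ennreal_leI)
      then show "\<exists>i\<in>UNIV. of_nat m \<le> Q i \<omega>" by blast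
    qed
    then show ?thesis using True by (simp add: log_neg_def)
  next
    case False
    then have ap: "0 < a \<omega>" using a0[of \<omega>] by simp
    have L1: "(\<lambda>n. Q n \<omega>) \<longlonglongrightarrow> (SUP n. Q n \<omega>)"
      by (rule LIMSEQ_SUP, rule incseq_SucI) (simp add: Q_def ennreal_leI gdec)
    have "(\<lambda>n. ennreal (- g n \<omega>)) \<longlonglongrightarrow> ennreal (- ln (a \<omega>))"
      using g_lim[OF ap b] unfolding g_def A_def by (intro tendsto_ennrealI tendsto_minus)
    then have L2: "(\<lambda>n. Q n \<omega>) \<longlonglongrightarrow> log_neg (ennreal (a \<omega>))"
      using ap by (simp add: Q_def log_neg_def ennreal_max0)
    show ?thesis using LIMSEQ_unique[OF L1 L2] .
  qed
  have "(\<integral>\<^sup>+\<omega>. log_neg (ennreal (a \<omega>)) \<partial>M) = (\<integral>\<^sup>+\<omega>. (SUP n. Q n \<omega>) \<partial>M)"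
    by (simp add: Qlim)
  also have "\<dots> = (SUP n. \<integral>\<^sup>+\<omega>. Q n \<omega> \<partial>M)"
    by (rule nn_integral_monotone_convergence_SUP[OF Qinc Qm])
  also have "\<dots> \<le> (INF n. \<integral>\<^sup>+\<omega>. P n \<omega> \<partial>M)"
  proof (intro SUP_least INF_greatest)
    fix n m
    have "(\<integral>\<^sup>+\<omega>. Q n \<omega> \<partial>M) \<le> (\<integral>\<^sup>+\<omega>. Q (max n m) \<omega> \<partial>M)"
      by (intro nn_integral_mono) (simp add: Q_def ennreal_leI gmono)
    also have "\<dots> \<le> (\<integral>\<^sup>+\<omega>. P (max n m) \<omega> \<partial>M)" by (rule QleP)
    also have "\<dots> \<le> (\<integral>\<^sup>+\<omega>. P m \<omega> \<partial>M)"
      by (intro nn_integral_mono) (simp add: P_def ennreal_leI gmono)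
    finally show "(\<integral>\<^sup>+\<omega>. Q n \<omega> \<partial>M) \<le> (\<integral>\<^sup>+\<omega>. P m \<omega> \<partial>M)" .
  qed
  also have "\<dots> = (\<integral>\<^sup>+\<omega>. (INF n. P n \<omega>) \<partial>M)"
    by (rule nn_integral_monotone_convergence_INF_decseq[OF Pdec Pm Pfin, symmetric])
  also have "\<dots> = (\<integral>\<^sup>+\<omega>. log_pos (ennreal (a \<omega>)) \<partial>M)"
    by (simp add: Plim)
  finally show False using lg by simp
qed

lemma powr_subadd:
  fixes x y \<alpha> :: real
  assumes x: "0 \<le> x" and y: "0 \<le> y" and a: "0 < \<alpha>" "\<alpha> \<le> 1"
  shows "(x + y) powr \<alpha> \<le> x powr \<alpha> + y powr \<alpha>"
proof (cases "x + y = 0")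
  case True
  then have "x = 0" "y = 0" using x y by auto
  then show ?thesis by simp
next
  case False
  then have s: "0 < x + y" using x y by simp
  have 1: "x / (x + y) \<le> (x / (x + y)) powr \<alpha>"
  proof -
    have "(x / (x + y)) powr 1 \<le> (x / (x + y)) powr \<alpha>"
      using a x y s by (intro powr_mono') (auto simp: divide_le_eq)
    then show ?thesis using x s by simp
  qed
  have 2: "y / (x + y) \<le> (y / (x + y)) powr \<alpha>"
  proof -
    have "(y / (x + y)) powr 1 \<le> (y / (x + y)) powr \<alpha>"
      using a x y s by (intro powr_mono') (auto simp: divide_le_eq)
    then show ?thesis using y s by simp
  qed
  have "1 = x / (x + y) + y / (x + y)" using s by (simp add: add_divide_distrib[symmetric])
  also have "\<dots> \<le> (x / (x + y)) powr \<alpha> + (y / (x + y)) powr \<alpha>" using 1 2 by simp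
  also have "\<dots> = (x powr \<alpha> + y powr \<alpha>) / (x + y) powr \<alpha>"
    using x y s by (simp add: powr_divide add_divide_distrib)
  finally show ?thesis using s by (simp add: le_divide_eq)
qed

context P5 begin

lemma prod_indep:
  fixes f :: "'i \<Rightarrow> 'e \<Rightarrow> ennreal" and \<tau> :: "'i \<Rightarrow> int"
  assumes J: "finite J" and inj: "inj_on \<tau> J" and fm: "\<And>j. j \<in> J \<Longrightarrow> f j \<in> borel_measurable N"
  shows "(\<integral>\<^sup>+\<omega>. (\<Prod>j\<in>J. f j (eps (\<tau> j) \<omega>)) \<partial>M) = (\<Prod>j\<in>J. \<integral>\<^sup>+z. f j z \<partial>mu)"
proof -
  define s where "s j = Some (\<tau> j)" for j
  have injs: "inj_on s J" using inj by (auto simp: inj_on_def s_def)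
  define K where "K = s ` J"
  define h where "h k = f (the_inv_into J s k)" for k
  have hs: "h (s j) = f j" if "j \<in> J" for j
    using the_inv_into_f_f[OF injs that] by (simp add: h_def)
  have hm: "h k \<in> borel_measurable N" if "k \<in> K" for k
    using that fm by (auto simp: K_def hs)
  have ind: "indep_vars (\<lambda>_. borel) (\<lambda>k \<omega>. h k (X k \<omega>)) K"
    by (rule indep_vars_compose2[OF indep_vars_subset[OF indepX] hm]) auto
  have "(\<integral>\<^sup>+\<omega>. (\<Prod>k\<in>K. h k (X k \<omega>)) \<partial>M) = (\<Prod>k\<in>K. \<integral>\<^sup>+\<omega>. h k (X k \<omega>) \<partial>M)"
    by (rule indep_vars_nn_integral[OF _ ind]) (auto simp: K_def J)
  moreover have "(\<Prod>k\<in>K. h k (X k \<omega>)) = (\<Prod>j\<in>J. f j (eps (\<tau> j) \<omega>))" for \<omega>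
    unfolding K_def by (subst prod.reindex[OF injs]) (auto simp: hs[unfolded s_def] s_def intro!: prod.cong)
  moreover have "(\<Prod>k\<in>K. \<integral>\<^sup>+\<omega>. h k (X k \<omega>) \<partial>M) = (\<Prod>j\<in>J. \<integral>\<^sup>+z. f j z \<partial>mu)"
  proof -
    have "(\<Prod>k\<in>K. \<integral>\<^sup>+\<omega>. h k (X k \<omega>) \<partial>M) = (\<Prod>j\<in>J. \<integral>\<^sup>+\<omega>. f j (eps (\<tau> j) \<omega>) \<partial>M)"
      unfolding K_def by (subst prod.reindex[OF injs]) (auto simp: hs[unfolded s_def] s_def intro!: prod.cong)
    also have "\<dots> = (\<Prod>j\<in>J. \<integral>\<^sup>+z. f j z \<partial>mu)"
    proof (rule prod.cong[OF refl])
      fix j assume j: "j \<in> J"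
      have "(\<integral>\<^sup>+\<omega>. f j (eps (\<tau> j) \<omega>) \<partial>M) = (\<integral>\<^sup>+z. f j z \<partial>distr M N (eps (\<tau> j)))"
        by (rule nn_integral_distr[symmetric]) (use fm[OF j] in simp_all)
      also have "distr M N (eps (\<tau> j)) = mu" unfolding mu_def by (rule ident)
      finally show "(\<integral>\<^sup>+\<omega>. f j (eps (\<tau> j) \<omega>) \<partial>M) = (\<integral>\<^sup>+z. f j z \<partial>mu)" .
    qed
    finally show ?thesis .
  qed
  ultimately show ?thesis by simp
qed

lemma indep_two_nn:
  fixes f g :: "(int option \<Rightarrow> 'e) \<Rightarrow> ennreal"
  assumes AB: "A \<inter> B = {}" and f: "f \<in> borel_measurable (Pi\<^sub>M A (\<lambda>_. N))"
    and g: "g \<in> borel_measurable (Pi\<^sub>M B (\<lambda>_. N))"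
  shows "(\<integral>\<^sup>+\<omega>. f (\<lambda>i\<in>A. X i \<omega>) * g (\<lambda>i\<in>B. X i \<omega>) \<partial>M)
       = (\<integral>\<^sup>+\<omega>. f (\<lambda>i\<in>A. X i \<omega>) \<partial>M) * (\<integral>\<^sup>+\<omega>. g (\<lambda>i\<in>B. X i \<omega>) \<partial>M)"
proof -
  have ind: "indep_var (Pi\<^sub>M A (\<lambda>_. N)) (\<lambda>\<omega>. \<lambda>i\<in>A. X i \<omega>) (Pi\<^sub>M B (\<lambda>_. N)) (\<lambda>\<omega>. \<lambda>i\<in>B. X i \<omega>)"
    by (rule indep_var_restrict[OF indepX AB]) auto
  define U where "U = f \<circ> (\<lambda>\<omega>. \<lambda>i\<in>A. X i \<omega>)"
  define V where "V = g \<circ> (\<lambda>\<omega>. \<lambda>i\<in>B. X i \<omega>)"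
  have ind2: "indep_var borel U borel V"
    unfolding U_def V_def by (rule indep_var_compose[OF ind f g])
  have bb: "case_bool borel borel = (\<lambda>_. borel)" by (rule ext) (simp split: bool.split)
  have ind3: "indep_vars (\<lambda>_. borel) (case_bool U V) UNIV"
    using ind2 unfolding indep_var_def bb .
  have "(\<integral>\<^sup>+\<omega>. (\<Prod>b\<in>UNIV. case_bool U V b \<omega>) \<partial>M) = (\<Prod>b\<in>UNIV. \<integral>\<^sup>+\<omega>. case_bool U V b \<omega> \<partial>M)"
    by (rule indep_vars_nn_integral[OF _ ind3]) auto
  then show ?thesis by (simp add: UNIV_bool U_def V_def mult.commute comp_def)
qed

end

context P5 begin

lemma alpha_choice:
  "\<exists>\<alpha>. 0 < \<alpha> \<and> \<alpha> \<le> 1 \<and> (\<integral>\<^sup>+z. ennreal (lr z powr \<alpha>) \<partial>mu) < 1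
      \<and> (\<integral>\<^sup>+z. ennreal (\<bar>R t0 z - t0\<bar> powr \<alpha>) \<partial>mu) < \<infinity>"
proof -
  define \<beta> where "\<beta> = min 1 q"
  have \<beta>: "0 < \<beta>" "\<beta> \<le> 1" "\<beta> \<le> q" using q by (auto simp: \<beta>_def)
  define a where "a \<omega> = lr (eps 0 \<omega>)" for \<omega>
  define L where "L \<omega> = enn2real (lipR R (eps 0 \<omega>))" for \<omega>
  have am[measurable]: "a \<in> borel_measurable M" unfolding a_def[abs_def] by measurable
  have a0: "0 \<le> a \<omega>" for \<omega> by (simp add: a_def)
  have L0: "0 \<le> L \<omega>" for \<omega> by (simp add: L_def)
  have aL: "AE \<omega> in M. a \<omega> \<le> L \<omega>"
    using lip_fin by eventually_elim (simp add: a_def L_def lr_le_lip)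
  define H where "H \<omega> = (L \<omega> + \<bar>R t0 (eps 0 \<omega>)\<bar>) powr q" for \<omega>
  have Hint: "integrable M H" using Lq unfolding H_def[abs_def] L_def .
  have Hm[measurable]: "H \<in> borel_measurable M" using Hint by (rule borel_measurable_integrable)
  have H0: "0 \<le> H \<omega>" for \<omega> by (simp add: H_def)
  have H1int: "integrable M (\<lambda>\<omega>. 1 + H \<omega>)" using Hint by simp
  have gen: "u powr \<alpha> \<le> 1 + H \<omega>" if "0 < \<alpha>" "\<alpha> \<le> q" "0 \<le> u" "u \<le> L \<omega> + \<bar>R t0 (eps 0 \<omega>)\<bar>" for u \<omega> \<alpha>
  proof (cases "u \<le> 1")
    case True
    then have "u powr \<alpha> \<le> 1" using that by (intro powr_le1) auto
    then show ?thesis using H0[of \<omega>] by simp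
  next
    case False
    have "u powr \<alpha> \<le> u powr q" using False that by (intro powr_mono) auto
    also have "\<dots> \<le> H \<omega>" unfolding H_def using that q by (intro powr_mono2) auto
    finally show ?thesis by simp
  qed
  have intg: "integrable M (\<lambda>\<omega>. a \<omega> powr \<alpha>)" if "0 < \<alpha>" "\<alpha> \<le> \<beta>" for \<alpha>
  proof (rule Bochner_Integration.integrable_bound[OF H1int])
    show "(\<lambda>\<omega>. a \<omega> powr \<alpha>) \<in> borel_measurable M" by measurable
    show "AE \<omega> in M. norm (a \<omega> powr \<alpha>) \<le> norm (1 + H \<omega>)"
      using aL
    proof eventually_elim
      case (elim \<omega>)
      have "a \<omega> powr \<alpha> \<le> 1 + H \<omega>"
        using that \<beta> elim a0[of \<omega>] by (intro gen) auto
      then show ?case using H0[of \<omega>] by simp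
    qed
  qed
  have lg: "(\<integral>\<^sup>+\<omega>. log_pos (ennreal (a \<omega>)) \<partial>M) < (\<integral>\<^sup>+\<omega>. log_neg (ennreal (a \<omega>)) \<partial>M)"
  proof -
    have "(\<integral>\<^sup>+\<omega>. log_pos (ennreal (a \<omega>)) \<partial>M) \<le> (\<integral>\<^sup>+\<omega>. log_pos (lipR R (eps 0 \<omega>)) \<partial>M)"
    proof (rule nn_integral_mono_AE)
      show "AE \<omega> in M. log_pos (ennreal (a \<omega>)) \<le> log_pos (lipR R (eps 0 \<omega>))"
        using lip_fin
      proof eventually_elim
        case (elim \<omega>)
        have le: "a \<omega> \<le> enn2real (lipR R (eps 0 \<omega>))" using elim by (simp add: a_def lr_le_lip)
        show ?case
        proof (cases "a \<omega> = 0")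
          case True then show ?thesis by (simp add: log_pos_def)
        next
          case False
          then have "0 < a \<omega>" using a0[of \<omega>] by simp
          then have "ln (a \<omega>) \<le> ln (enn2real (lipR R (eps 0 \<omega>)))" using le by simp
          then show ?thesis using elim a0[of \<omega>]
            by (auto simp: log_pos_def intro!: ennreal_leI)
        qed
      qed
    qed
    also have "\<dots> < (\<integral>\<^sup>+\<omega>. log_neg (lipR R (eps 0 \<omega>)) \<partial>M)" by (rule Elog)
    also have "\<dots> \<le> (\<integral>\<^sup>+\<omega>. log_neg (ennreal (a \<omega>)) \<partial>M)"
    proof (rule nn_integral_mono_AE)
      show "AE \<omega> in M. log_neg (lipR R (eps 0 \<omega>)) \<le> log_neg (ennreal (a \<omega>))"
        using lip_fin
      proof eventually_elim
        case (elim \<omega>)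
        have le: "a \<omega> \<le> enn2real (lipR R (eps 0 \<omega>))" using elim by (simp add: a_def lr_le_lip)
        show ?case
        proof (cases "a \<omega> = 0")
          case True then show ?thesis by (simp add: log_neg_def)
        next
          case False
          then have ap: "0 < a \<omega>" using a0[of \<omega>] by simp
          then have lp: "0 < enn2real (lipR R (eps 0 \<omega>))" using le by simp
          have "ln (a \<omega>) \<le> ln (enn2real (lipR R (eps 0 \<omega>)))" using le ap by simp
          moreover have "lipR R (eps 0 \<omega>) \<noteq> 0" "lipR R (eps 0 \<omega>) \<noteq> \<infinity>" using lp elim by auto
          ultimately show ?thesis using ap
            by (auto simp: log_neg_def intro!: ennreal_leI)
        qed
      qed
    qed
    finally show ?thesis .
  qed
  obtain \<alpha> where \<alpha>: "0 < \<alpha>" "\<alpha> \<le> \<beta>" "(\<integral>\<omega>. a \<omega> powr \<alpha> \<partial>M) < 1"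
    using alpha_exists[OF prob_space_axioms am a0 \<beta>(1) intg lg] by blast
  have rho: "(\<integral>\<^sup>+z. ennreal (lr z powr \<alpha>) \<partial>mu) < 1"
  proof -
    have "(\<integral>\<^sup>+z. ennreal (lr z powr \<alpha>) \<partial>mu) = (\<integral>\<^sup>+\<omega>. ennreal (a \<omega> powr \<alpha>) \<partial>M)"
      unfolding mu_def a_def by (rule nn_integral_distr) auto
    also have "\<dots> = ennreal (\<integral>\<omega>. a \<omega> powr \<alpha> \<partial>M)"
      by (rule nn_integral_eq_integral[OF intg[OF \<alpha>(1,2)]]) auto
    also have "\<dots> < 1" using \<alpha>(3) by (simp add: ennreal_lessI)
    finally show ?thesis .
  qed
  have cfin: "(\<integral>\<^sup>+z. ennreal (\<bar>R t0 z - t0\<bar> powr \<alpha>) \<partial>mu) < \<infinity>"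
  proof -
    have "(\<integral>\<^sup>+z. ennreal (\<bar>R t0 z - t0\<bar> powr \<alpha>) \<partial>mu) = (\<integral>\<^sup>+\<omega>. ennreal (\<bar>R t0 (eps 0 \<omega>) - t0\<bar> powr \<alpha>) \<partial>M)"
      unfolding mu_def by (rule nn_integral_distr) auto
    also have "\<dots> \<le> (\<integral>\<^sup>+\<omega>. ennreal (1 + H \<omega> + \<bar>t0\<bar> powr \<alpha>) \<partial>M)"
    proof (rule nn_integral_mono, rule ennreal_leI)
      fix \<omega>
      have "\<bar>R t0 (eps 0 \<omega>) - t0\<bar> powr \<alpha> \<le> (\<bar>R t0 (eps 0 \<omega>)\<bar> + \<bar>t0\<bar>) powr \<alpha>"
        using \<alpha> by (intro powr_mono2) auto
      also have "\<dots> \<le> \<bar>R t0 (eps 0 \<omega>)\<bar> powr \<alpha> + \<bar>t0\<bar> powr \<alpha>"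
        using \<alpha> \<beta> by (intro powr_subadd) auto
      also have "\<bar>R t0 (eps 0 \<omega>)\<bar> powr \<alpha> \<le> 1 + H \<omega>"
        using \<alpha> \<beta> L0[of \<omega>] by (intro gen) auto
      finally show "\<bar>R t0 (eps 0 \<omega>) - t0\<bar> powr \<alpha> \<le> 1 + H \<omega> + \<bar>t0\<bar> powr \<alpha>" by simp
    qed
    also have "\<dots> = ennreal (\<integral>\<omega>. 1 + H \<omega> + \<bar>t0\<bar> powr \<alpha> \<partial>M)"
      by (rule nn_integral_eq_integral) (use Hint H0 in auto)
    also have "\<dots> < \<infinity>" by simp
    finally show ?thesis .
  qed
  show ?thesis using \<alpha> \<beta> rho cfin by (intro exI[of _ \<alpha>]) auto
qed

end

context P5 begin

lemma moment_bound:
  assumes a: "0 < \<alpha>" "\<alpha> \<le> 1"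
    and rho: "(\<integral>\<^sup>+z. ennreal (lr z powr \<alpha>) \<partial>mu) < 1"
    and cfin: "(\<integral>\<^sup>+z. ennreal (\<bar>R t0 z - t0\<bar> powr \<alpha>) \<partial>mu) < \<infinity>"
  shows "(\<integral>\<^sup>+\<omega>. ennreal (\<bar>eproc G eps 0 \<omega> - t0\<bar> powr \<alpha>) \<partial>M) < \<infinity>"
proof -
  define \<rho> where "\<rho> = (\<integral>\<^sup>+z. ennreal (lr z powr \<alpha>) \<partial>mu)"
  define c where "c = (\<integral>\<^sup>+z. ennreal (\<bar>R t0 z - t0\<bar> powr \<alpha>) \<partial>mu)"
  obtain \<rho>r where \<rho>r: "\<rho> = ennreal \<rho>r" "0 \<le> \<rho>r"
    using rho unfolding \<rho>_def[symmetric] by (cases \<rho> rule: ennreal_cases) auto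
  have \<rho>r1: "\<rho>r < 1" using rho unfolding \<rho>_def[symmetric] \<rho>r(1) by (simp add: ennreal_less_one_iff)
  obtain cr where cr: "c = ennreal cr" "0 \<le> cr"
    using cfin unfolding c_def[symmetric] by (cases c rule: ennreal_cases) auto
  define S where "S = cr / (1 - \<rho>r)"
  have S0: "0 \<le> S" using cr \<rho>r1 by (simp add: S_def)
  define Y where "Y j \<omega> = \<bar>eproc G eps (- int j) \<omega> - t0\<bar> powr \<alpha>" for j \<omega>
  define l where "l j \<omega> = lr (eps (- int j) \<omega>) powr \<alpha>" for j \<omega>
  define cc where "cc j \<omega> = \<bar>R t0 (eps (- int j) \<omega>) - t0\<bar> powr \<alpha>" for j \<omega>
  have Y0: "0 \<le> Y j \<omega>" and l0: "0 \<le> l j \<omega>" and cc0: "0 \<le> cc j \<omega>" for j \<omega>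
    by (simp_all add: Y_def l_def cc_def)
  have Ym[measurable]: "Y j \<in> borel_measurable M" for j unfolding Y_def[abs_def] by measurable
  have lm[measurable]: "l j \<in> borel_measurable M" for j unfolding l_def[abs_def] by measurable
  have ccm[measurable]: "cc j \<in> borel_measurable M" for j unfolding cc_def[abs_def] by measurable
  have step: "AE \<omega> in M. Y j \<omega> \<le> l j \<omega> * Y (Suc j) \<omega> + cc j \<omega>" for j
    using mom_step[of j]
  proof eventually_elim
    case (elim \<omega>)
    let ?u = "\<bar>eproc G eps (- int j) \<omega> - t0\<bar>"
    let ?v = "lr (eps (- int j) \<omega>) * \<bar>eproc G eps (- int (Suc j)) \<omega> - t0\<bar>"
    let ?w = "\<bar>R t0 (eps (- int j) \<omega>) - t0\<bar>"
    have eq: "- int (Suc j) = - int j - 1" by simp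
    have "?u \<le> ?v + ?w" using elim unfolding eq by linarith
    then have "?u powr \<alpha> \<le> (?v + ?w) powr \<alpha>" using a by (intro powr_mono2) auto
    also have "\<dots> \<le> ?v powr \<alpha> + ?w powr \<alpha>" using a by (intro powr_subadd) auto
    also have "?v powr \<alpha> = l j \<omega> * Y (Suc j) \<omega>"
      by (simp add: l_def Y_def powr_mult)
    finally show ?case by (simp add: Y_def cc_def)
  qed
  have iter: "AE \<omega> in M. \<forall>m. Y 0 \<omega> \<le> (\<Prod>j<m. l j \<omega>) * Y m \<omega> + (\<Sum>j<m. (\<Prod>i<j. l i \<omega>) * cc j \<omega>)"
  proof -
    have "AE \<omega> in M. \<forall>j. Y j \<omega> \<le> l j \<omega> * Y (Suc j) \<omega> + cc j \<omega>"
      by (simp add: AE_all_countable step)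
    then show ?thesis
    proof eventually_elim
      case (elim \<omega>)
      show ?case
      proof
        fix m show "Y 0 \<omega> \<le> (\<Prod>j<m. l j \<omega>) * Y m \<omega> + (\<Sum>j<m. (\<Prod>i<j. l i \<omega>) * cc j \<omega>)"
        proof (induction m)
          case 0 then show ?case by simp
        next
          case (Suc m)
          have P0: "0 \<le> (\<Prod>j<m. l j \<omega>)" by (simp add: prod_nonneg l0)
          have "(\<Prod>j<m. l j \<omega>) * Y m \<omega> \<le> (\<Prod>j<m. l j \<omega>) * (l m \<omega> * Y (Suc m) \<omega> + cc m \<omega>)"
            using elim P0 by (intro mult_left_mono) auto
          then show ?case using Suc.IH by (simp add: algebra_simps)
        qed
      qed
    qed
  qed
  have EP: "(\<integral>\<^sup>+\<omega>. (\<Prod>j<m. ennreal (l j \<omega>)) \<partial>M) = \<rho> ^ m" for m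
  proof -
    have "(\<integral>\<^sup>+\<omega>. (\<Prod>j<m. ennreal (l j \<omega>)) \<partial>M) = (\<integral>\<^sup>+\<omega>. (\<Prod>j\<in>{..<m}. (\<lambda>z. ennreal (lr z powr \<alpha>)) (eps (- int j) \<omega>)) \<partial>M)"
      by (simp add: l_def)
    also have "\<dots> = (\<Prod>j\<in>{..<m}. \<rho>)"
      unfolding \<rho>_def by (rule prod_indep) (auto simp: inj_on_def)
    finally show ?thesis by simp
  qed
  have EPc: "(\<integral>\<^sup>+\<omega>. (\<Prod>i<j. ennreal (l i \<omega>)) * ennreal (cc j \<omega>) \<partial>M) = \<rho> ^ j * c" for j
  proof -
    define f where "f i = (if i = j then (\<lambda>z. ennreal (\<bar>R t0 z - t0\<bar> powr \<alpha>)) else (\<lambda>z. ennreal (lr z powr \<alpha>)))" for i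
    have m1: "(\<lambda>z. ennreal (\<bar>R t0 z - t0\<bar> powr \<alpha>)) \<in> borel_measurable N" by measurable
    have m2: "(\<lambda>z. ennreal (lr z powr \<alpha>)) \<in> borel_measurable N" by measurable
    have fm: "f i \<in> borel_measurable N" for i unfolding f_def using m1 m2 by simp
    have "(\<Prod>i<j. ennreal (l i \<omega>)) * ennreal (cc j \<omega>) = (\<Prod>i\<in>{..<Suc j}. f i (eps (- int i) \<omega>))" for \<omega>
      by (simp add: f_def l_def cc_def)
    then have "(\<integral>\<^sup>+\<omega>. (\<Prod>i<j. ennreal (l i \<omega>)) * ennreal (cc j \<omega>) \<partial>M)
        = (\<integral>\<^sup>+\<omega>. (\<Prod>i\<in>{..<Suc j}. f i (eps (- int i) \<omega>)) \<partial>M)" by simp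
    also have "\<dots> = (\<Prod>i\<in>{..<Suc j}. \<integral>\<^sup>+z. f i z \<partial>mu)"
      by (rule prod_indep[OF _ _ fm]) (auto simp: inj_on_def)
    also have "\<dots> = \<rho> ^ j * c"
      by (simp add: f_def \<rho>_def c_def)
    finally show ?thesis .
  qed
  have tail: "emeasure M {\<omega>\<in>space M. T < Y m \<omega>} = emeasure M {\<omega>\<in>space M. T < Y 0 \<omega>}" for T m
  proof -
    have "emeasure M {\<omega>\<in>space M. T < Y k \<omega>} = emeasure nu {x\<in>space borel. T < \<bar>x - t0\<bar> powr \<alpha>}" for k
    proof -
      have "emeasure M {\<omega>\<in>space M. T < Y k \<omega>} =
          emeasure M (eproc G eps (- int k) -` {x\<in>space borel. T < \<bar>x - t0\<bar> powr \<alpha>} \<inter> space M)"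
        by (rule arg_cong[where f="emeasure M"]) (auto simp: Y_def)
      also have "\<dots> = emeasure (distr M borel (eproc G eps (- int k))) {x\<in>space borel. T < \<bar>x - t0\<bar> powr \<alpha>}"
        by (rule emeasure_distr[symmetric]) measurable
      also have "\<dots> = emeasure nu {x\<in>space borel. T < \<bar>x - t0\<bar> powr \<alpha>}" by (simp add: e_law)
      finally show ?thesis .
    qed
    from this[of m] this[of 0] show ?thesis by simp
  qed
  have trunc: "(\<integral>\<^sup>+\<omega>. ennreal (min (Y 0 \<omega>) (real K)) \<partial>M)
      \<le> ennreal T * \<rho> ^ m + ennreal (real K) * emeasure M {\<omega>\<in>space M. T < Y 0 \<omega>} + (\<Sum>j<m. \<rho> ^ j * c)"
    if T: "0 \<le> T" for K :: nat and T :: real and m :: nat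
  proof -
    define Bset where "Bset = {\<omega>\<in>space M. T < Y m \<omega>}"
    have Bm[measurable]: "Bset \<in> sets M" unfolding Bset_def by measurable
    have "(\<integral>\<^sup>+\<omega>. ennreal (min (Y 0 \<omega>) (real K)) \<partial>M)
       \<le> (\<integral>\<^sup>+\<omega>. ennreal T * (\<Prod>j<m. ennreal (l j \<omega>)) + ennreal (real K) * indicator Bset \<omega>
             + (\<Sum>j<m. (\<Prod>i<j. ennreal (l i \<omega>)) * ennreal (cc j \<omega>)) \<partial>M)"
    proof (rule nn_integral_mono_AE)
      show "AE \<omega> in M. ennreal (min (Y 0 \<omega>) (real K)) \<le> ennreal T * (\<Prod>j<m. ennreal (l j \<omega>))
             + ennreal (real K) * indicator Bset \<omega> + (\<Sum>j<m. (\<Prod>i<j. ennreal (l i \<omega>)) * ennreal (cc j \<omega>))"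
        using iter AE_space
      proof eventually_elim
        case (elim \<omega>)
        define P where "P = (\<Prod>j<m. l j \<omega>)"
        define Sm where "Sm = (\<Sum>j<m. (\<Prod>i<j. l i \<omega>) * cc j \<omega>)"
        have P0: "0 \<le> P" by (simp add: P_def prod_nonneg l0)
        have Sm0: "0 \<le> Sm" by (simp add: Sm_def sum_nonneg prod_nonneg l0 cc0)
        have eP: "(\<Prod>j<m. ennreal (l j \<omega>)) = ennreal P"
          unfolding P_def by (rule prod_ennreal) (simp add: l0)
        have eS: "(\<Sum>j<m. (\<Prod>i<j. ennreal (l i \<omega>)) * ennreal (cc j \<omega>)) = ennreal Sm"
        proof -
          have "(\<Sum>j<m. (\<Prod>i<j. ennreal (l i \<omega>)) * ennreal (cc j \<omega>)) = (\<Sum>j<m. ennreal ((\<Prod>i<j. l i \<omega>) * cc j \<omega>))"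
            by (intro sum.cong refl) (simp add: prod_ennreal l0 cc0 prod_nonneg ennreal_mult)
          also have "\<dots> = ennreal Sm" unfolding Sm_def
            by (rule sum_ennreal) (simp add: prod_nonneg l0 cc0)
          finally show ?thesis .
        qed
        have key: "min (Y 0 \<omega>) (real K) \<le> T * P + real K * indicator Bset \<omega> + Sm"
        proof (cases "\<omega> \<in> Bset")
          case True
          have "0 \<le> T * P" using T P0 by simp
          then show ?thesis using True Sm0 by simp
        next
          case False
          then have "Y m \<omega> \<le> T" using elim(2) by (auto simp: Bset_def)
          then have "P * Y m \<omega> \<le> P * T" using P0 by (intro mult_left_mono) auto
          moreover have "Y 0 \<omega> \<le> P * Y m \<omega> + Sm" using elim(1) by (simp add: P_def Sm_def)
          ultimately show ?thesis using False by (simp add: mult.commute)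
        qed
        have "ennreal (min (Y 0 \<omega>) (real K)) \<le> ennreal (T * P + real K * indicator Bset \<omega> + Sm)"
          by (rule ennreal_leI[OF key])
        also have "\<dots> = ennreal T * ennreal P + ennreal (real K) * indicator Bset \<omega> + ennreal Sm"
          using T P0 Sm0 by (simp add: ennreal_plus ennreal_mult indicator_def)
        finally show ?case unfolding eP eS .
      qed
    qed
    also have "\<dots> = (\<integral>\<^sup>+\<omega>. ennreal T * (\<Prod>j<m. ennreal (l j \<omega>)) + ennreal (real K) * indicator Bset \<omega> \<partial>M)
             + (\<integral>\<^sup>+\<omega>. (\<Sum>j<m. (\<Prod>i<j. ennreal (l i \<omega>)) * ennreal (cc j \<omega>)) \<partial>M)"
      by (rule nn_integral_add) measurable
    also have "(\<integral>\<^sup>+\<omega>. ennreal T * (\<Prod>j<m. ennreal (l j \<omega>)) + ennreal (real K) * indicator Bset \<omega> \<partial>M)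
       = (\<integral>\<^sup>+\<omega>. ennreal T * (\<Prod>j<m. ennreal (l j \<omega>)) \<partial>M) + (\<integral>\<^sup>+\<omega>. ennreal (real K) * indicator Bset \<omega> \<partial>M)"
      by (rule nn_integral_add) measurable
    also have "(\<integral>\<^sup>+\<omega>. ennreal T * (\<Prod>j<m. ennreal (l j \<omega>)) \<partial>M) = ennreal T * (\<integral>\<^sup>+\<omega>. (\<Prod>j<m. ennreal (l j \<omega>)) \<partial>M)"
      by (rule nn_integral_cmult) measurable
    also have "(\<integral>\<^sup>+\<omega>. ennreal (real K) * indicator Bset \<omega> \<partial>M) = ennreal (real K) * emeasure M Bset"
      by (rule nn_integral_cmult_indicator[OF Bm])
    also have "(\<integral>\<^sup>+\<omega>. (\<Sum>j<m. (\<Prod>i<j. ennreal (l i \<omega>)) * ennreal (cc j \<omega>)) \<partial>M)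
        = (\<Sum>j<m. \<integral>\<^sup>+\<omega>. (\<Prod>i<j. ennreal (l i \<omega>)) * ennreal (cc j \<omega>) \<partial>M)"
      by (rule nn_integral_sum) measurable
    also have "emeasure M Bset = emeasure M {\<omega>\<in>space M. T < Y 0 \<omega>}"
      unfolding Bset_def by (rule tail)
    also have "(\<Sum>j<m. \<integral>\<^sup>+\<omega>. (\<Prod>i<j. ennreal (l i \<omega>)) * ennreal (cc j \<omega>) \<partial>M) = (\<Sum>j<m. \<rho> ^ j * c)"
      by (rule sum.cong[OF refl]) (rule EPc)
    also note EP
    finally show ?thesis .
  qed
  have p_lim: "(\<lambda>n. measure M {\<omega>\<in>space M. real n < Y 0 \<omega>}) \<longlonglongrightarrow> 0"
  proof -
    have "(\<lambda>n. measure M {\<omega>\<in>space M. real n < Y 0 \<omega>}) \<longlonglongrightarrow> measure M (\<Inter>n. {\<omega>\<in>space M. real n < Y 0 \<omega>})"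
    proof (rule finite_Lim_measure_decseq)
      show "range (\<lambda>n. {\<omega>\<in>space M. real n < Y 0 \<omega>}) \<subseteq> sets M" by auto
      show "decseq (\<lambda>n. {\<omega>\<in>space M. real n < Y 0 \<omega>})"
        by (rule decseq_SucI) auto
    qed
    moreover have "(\<Inter>n. {\<omega>\<in>space M. real n < Y 0 \<omega>}) = {}"
    proof -
      have "\<omega> \<notin> (\<Inter>n. {\<omega>\<in>space M. real n < Y 0 \<omega>})" for \<omega>
      proof -
        obtain n where "Y 0 \<omega> \<le> real n" using real_arch_simple by blast
        then have "\<omega> \<notin> {\<omega>\<in>space M. real n < Y 0 \<omega>}" by auto
        then show ?thesis by blast
      qed
      then show ?thesis by blast
    qed
    ultimately show ?thesis by simp
  qed
  have sumb: "(\<Sum>j<m. \<rho> ^ j * c) \<le> ennreal S" for m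
  proof -
    have "(\<Sum>j<m. \<rho> ^ j * c) = (\<Sum>j<m. ennreal (\<rho>r ^ j * cr))"
      using \<rho>r cr by (intro sum.cong refl) (simp add: ennreal_power ennreal_mult)
    also have "\<dots> = ennreal (\<Sum>j<m. \<rho>r ^ j * cr)"
      using \<rho>r cr by (intro sum_ennreal) simp
    also have "(\<Sum>j<m. \<rho>r ^ j * cr) = cr * (\<Sum>j<m. \<rho>r ^ j)" by (simp add: sum_distrib_left mult.commute)
    also have "(\<Sum>j<m. \<rho>r ^ j) = (1 - \<rho>r ^ m) / (1 - \<rho>r)"
      using \<rho>r1 by (subst sum_gp_strict) auto
    also have "cr * ((1 - \<rho>r ^ m) / (1 - \<rho>r)) \<le> S"
    proof -
      have "(1 - \<rho>r ^ m) / (1 - \<rho>r) \<le> 1 / (1 - \<rho>r)"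
        using \<rho>r \<rho>r1 by (intro divide_right_mono) auto
      then have "cr * ((1 - \<rho>r ^ m) / (1 - \<rho>r)) \<le> cr * (1 / (1 - \<rho>r))"
        using cr by (intro mult_left_mono) auto
      then show ?thesis by (simp add: S_def)
    qed
    finally show ?thesis by (simp add: ennreal_leI)
  qed
  have bound: "(\<integral>\<^sup>+\<omega>. ennreal (min (Y 0 \<omega>) (real K)) \<partial>M) \<le> ennreal S" for K :: nat
  proof (rule ennreal_le_epsilon)
    fix e :: real assume e: "0 < e"
    have "(\<lambda>n. real K * measure M {\<omega>\<in>space M. real n < Y 0 \<omega>}) \<longlonglongrightarrow> real K * 0"
      by (intro tendsto_mult tendsto_const p_lim)
    then have "eventually (\<lambda>n. real K * measure M {\<omega>\<in>space M. real n < Y 0 \<omega>} < e / 2) sequentially"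
      using e by (intro order_tendstoD(2)) auto
    then obtain n where n: "real K * measure M {\<omega>\<in>space M. real n < Y 0 \<omega>} < e / 2"
      by (auto simp: eventually_sequentially)
    have "(\<lambda>m. real n * \<rho>r ^ m) \<longlonglongrightarrow> real n * 0"
      using \<rho>r \<rho>r1 by (intro tendsto_mult tendsto_const LIMSEQ_power_zero) auto
    then have "eventually (\<lambda>m. real n * \<rho>r ^ m < e / 2) sequentially"
      using e by (intro order_tendstoD(2)) auto
    then obtain m where m: "real n * \<rho>r ^ m < e / 2"
      by (auto simp: eventually_sequentially)
    have "(\<integral>\<^sup>+\<omega>. ennreal (min (Y 0 \<omega>) (real K)) \<partial>M)
       \<le> ennreal (real n) * \<rho> ^ m + ennreal (real K) * emeasure M {\<omega>\<in>space M. real n < Y 0 \<omega>} + (\<Sum>j<m. \<rho> ^ j * c)"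
      by (rule trunc) simp
    also have "ennreal (real n) * \<rho> ^ m = ennreal (real n * \<rho>r ^ m)"
      using \<rho>r by (simp add: ennreal_power ennreal_mult)
    also have "ennreal (real K) * emeasure M {\<omega>\<in>space M. real n < Y 0 \<omega>}
        = ennreal (real K * measure M {\<omega>\<in>space M. real n < Y 0 \<omega>})"
      by (simp add: emeasure_eq_measure ennreal_mult)
    also have "ennreal (real n * \<rho>r ^ m) + ennreal (real K * measure M {\<omega>\<in>space M. real n < Y 0 \<omega>}) + (\<Sum>j<m. \<rho> ^ j * c)
        \<le> ennreal (e / 2) + ennreal (e / 2) + ennreal S"
      using m n sumb[of m] by (intro add_mono ennreal_leI) auto
    also have "\<dots> = ennreal S + ennreal e"
      using e by (simp add: ennreal_plus[symmetric] del: ennreal_plus)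
    finally show "(\<integral>\<^sup>+\<omega>. ennreal (min (Y 0 \<omega>) (real K)) \<partial>M) \<le> ennreal S + ennreal e" .
  qed
  have sup: "ennreal (Y 0 \<omega>) = (SUP K. ennreal (min (Y 0 \<omega>) (real K)))" for \<omega>
  proof (rule antisym)
    obtain K where K: "Y 0 \<omega> \<le> real K" using real_arch_simple by blast
    then have "ennreal (Y 0 \<omega>) = ennreal (min (Y 0 \<omega>) (real K))" by simp
    then show "ennreal (Y 0 \<omega>) \<le> (SUP K. ennreal (min (Y 0 \<omega>) (real K)))"
      by (metis SUP_upper UNIV_I)
    show "(SUP K. ennreal (min (Y 0 \<omega>) (real K))) \<le> ennreal (Y 0 \<omega>)"
      by (rule SUP_least) (simp add: ennreal_leI)
  qed
  have inc: "incseq (\<lambda>K \<omega>. ennreal (min (Y 0 \<omega>) (real K)))"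
    by (intro incseq_SucI le_funI ennreal_leI) auto
  have "(\<integral>\<^sup>+\<omega>. ennreal (Y 0 \<omega>) \<partial>M) = (\<integral>\<^sup>+\<omega>. (SUP K. ennreal (min (Y 0 \<omega>) (real K))) \<partial>M)"
    by (simp add: sup[symmetric])
  also have "\<dots> = (SUP K. \<integral>\<^sup>+\<omega>. ennreal (min (Y 0 \<omega>) (real K)) \<partial>M)"
    by (rule nn_integral_monotone_convergence_SUP[OF inc]) simp
  also have "\<dots> \<le> ennreal S" by (rule SUP_least) (rule bound)
  also have "\<dots> < \<infinity>" by simp
  finally show ?thesis by (simp add: Y_def)
qed

end

context P5 begin

lemma chain_powr:
  assumes a: "0 < \<alpha>"
  shows "AE \<omega> in M. \<forall>i. \<bar>eproc G eps (int i) \<omega> - estar G eps eps' i \<omega>\<bar> powr \<alpha>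
     \<le> (\<Prod>k\<in>{1..i}. lr (eps (int k) \<omega>) powr \<alpha>) * \<bar>eproc G eps 0 \<omega> - estar G eps eps' 0 \<omega>\<bar> powr \<alpha>"
proof -
  have "AE \<omega> in M. \<forall>i. 1 \<le> i \<longrightarrow> \<bar>eproc G eps (int i) \<omega> - estar G eps eps' i \<omega>\<bar>
     \<le> lr (eps (int i) \<omega>) * \<bar>eproc G eps (int (i - 1)) \<omega> - estar G eps eps' (i - 1) \<omega>\<bar>"
  proof (subst AE_all_countable, intro allI)
    fix i :: nat
    show "AE \<omega> in M. 1 \<le> i \<longrightarrow> \<bar>eproc G eps (int i) \<omega> - estar G eps eps' i \<omega>\<bar>
     \<le> lr (eps (int i) \<omega>) * \<bar>eproc G eps (int (i - 1)) \<omega> - estar G eps eps' (i - 1) \<omega>\<bar>"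
    proof (cases "1 \<le> i")
      case True
      show ?thesis using chain_step[OF True] by eventually_elim blast
    qed simp
  qed
  then show ?thesis
  proof eventually_elim
    case (elim \<omega>)
    show ?case
    proof
      fix i show "\<bar>eproc G eps (int i) \<omega> - estar G eps eps' i \<omega>\<bar> powr \<alpha>
         \<le> (\<Prod>k\<in>{1..i}. lr (eps (int k) \<omega>) powr \<alpha>) * \<bar>eproc G eps 0 \<omega> - estar G eps eps' 0 \<omega>\<bar> powr \<alpha>"
      proof (induction i)
        case 0 then show ?case by simp
      next
        case (Suc i)
        have st: "\<bar>eproc G eps (int (Suc i)) \<omega> - estar G eps eps' (Suc i) \<omega>\<bar>
           \<le> lr (eps (int (Suc i)) \<omega>) * \<bar>eproc G eps (int i) \<omega> - estar G eps eps' i \<omega>\<bar>"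
          using elim[rule_format, of "Suc i"] by simp
        have "\<bar>eproc G eps (int (Suc i)) \<omega> - estar G eps eps' (Suc i) \<omega>\<bar> powr \<alpha>
           \<le> (lr (eps (int (Suc i)) \<omega>) * \<bar>eproc G eps (int i) \<omega> - estar G eps eps' i \<omega>\<bar>) powr \<alpha>"
          using st a by (intro powr_mono2) auto
        also have "\<dots> = lr (eps (int (Suc i)) \<omega>) powr \<alpha> * \<bar>eproc G eps (int i) \<omega> - estar G eps eps' i \<omega>\<bar> powr \<alpha>"
          by (simp add: powr_mult)
        also have "\<dots> \<le> lr (eps (int (Suc i)) \<omega>) powr \<alpha> *
            ((\<Prod>k\<in>{1..i}. lr (eps (int k) \<omega>) powr \<alpha>) * \<bar>eproc G eps 0 \<omega> - estar G eps eps' 0 \<omega>\<bar> powr \<alpha>)"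
          using Suc.IH by (intro mult_left_mono) auto
        also have "\<dots> = (\<Prod>k\<in>{1..Suc i}. lr (eps (int k) \<omega>) powr \<alpha>) * \<bar>eproc G eps 0 \<omega> - estar G eps eps' 0 \<omega>\<bar> powr \<alpha>"
          by (simp add: atLeastAtMostSuc_conv)
        finally show ?case .
      qed
    qed
  qed
qed

lemma main_bound:
  assumes a: "0 < \<alpha>"
  shows "(\<integral>\<^sup>+\<omega>. ennreal (\<bar>eproc G eps (int i) \<omega> - estar G eps eps' i \<omega>\<bar> powr \<alpha>) \<partial>M)
    \<le> (\<integral>\<^sup>+z. ennreal (lr z powr \<alpha>) \<partial>mu) ^ i * (\<integral>\<^sup>+\<omega>. ennreal (\<bar>eproc G eps 0 \<omega> - estar G eps eps' 0 \<omega>\<bar> powr \<alpha>) \<partial>M)"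
proof -
  define A where "A = (\<lambda>k. Some (int k)) ` {1..i}"
  define B where "B = - A"
  have AB: "A \<inter> B = {}" by (auto simp: B_def)
  define fA where "fA y = (\<Prod>k\<in>{1..i}. ennreal (lr (y (Some (int k))) powr \<alpha>))" for y :: "int option \<Rightarrow> 'e"
  define gB where "gB y = ennreal (\<bar>G (\<lambda>m. y (sig 0 m)) - G (\<lambda>m. y (sigs 0 m))\<bar> powr \<alpha>)" for y :: "int option \<Rightarrow> 'e"
  have hm[measurable]: "(\<lambda>z. ennreal (lr z powr \<alpha>)) \<in> borel_measurable N" by measurable
  have fAm: "fA \<in> borel_measurable (Pi\<^sub>M A (\<lambda>_. N))"
    unfolding fA_def[abs_def]
  proof (rule borel_measurable_prod_ennreal)
    fix k assume k: "k \<in> {1..i}"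
    have p: "(\<lambda>y. y (Some (int k))) \<in> measurable (Pi\<^sub>M A (\<lambda>_. N)) N"
      using k by (intro measurable_component_singleton) (auto simp: A_def)
    show "(\<lambda>y. ennreal (lr (y (Some (int k))) powr \<alpha>)) \<in> borel_measurable (Pi\<^sub>M A (\<lambda>_. N))"
      using measurable_compose[OF p hm] by simp
  qed
  have r1: "range (sig 0) \<subseteq> B" by (auto simp: B_def A_def sig_def)
  have r2: "range (sigs 0) \<subseteq> B" by (auto simp: B_def A_def sigs_def)
  have g1[measurable]: "(\<lambda>y. G (\<lambda>m. y (sig 0 m))) \<in> borel_measurable (Pi\<^sub>M B (\<lambda>_. N))"
    by (rule restrict_G_meas[OF r1])
  have g2[measurable]: "(\<lambda>y. G (\<lambda>m. y (sigs 0 m))) \<in> borel_measurable (Pi\<^sub>M B (\<lambda>_. N))"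
    by (rule restrict_G_meas[OF r2])
  have gBm: "gB \<in> borel_measurable (Pi\<^sub>M B (\<lambda>_. N))"
    unfolding gB_def[abs_def] by measurable
  have fAe: "fA (\<lambda>j\<in>A. X j \<omega>) = (\<Prod>k\<in>{1..i}. ennreal (lr (eps (int k) \<omega>) powr \<alpha>))" for \<omega>
    unfolding fA_def by (intro prod.cong refl) (auto simp: A_def)
  have gBe: "gB (\<lambda>j\<in>B. X j \<omega>) = ennreal (\<bar>eproc G eps 0 \<omega> - estar G eps eps' 0 \<omega>\<bar> powr \<alpha>)" for \<omega>
    unfolding gB_def restrict_eval[OF r1] restrict_eval[OF r2] eproc_X estar_X by simp
  have "(\<integral>\<^sup>+\<omega>. ennreal (\<bar>eproc G eps (int i) \<omega> - estar G eps eps' i \<omega>\<bar> powr \<alpha>) \<partial>M)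
      \<le> (\<integral>\<^sup>+\<omega>. fA (\<lambda>j\<in>A. X j \<omega>) * gB (\<lambda>j\<in>B. X j \<omega>) \<partial>M)"
  proof (rule nn_integral_mono_AE)
    show "AE \<omega> in M. ennreal (\<bar>eproc G eps (int i) \<omega> - estar G eps eps' i \<omega>\<bar> powr \<alpha>)
        \<le> fA (\<lambda>j\<in>A. X j \<omega>) * gB (\<lambda>j\<in>B. X j \<omega>)"
      using chain_powr[OF a]
    proof eventually_elim
      case (elim \<omega>)
      have P0: "0 \<le> (\<Prod>k\<in>{1..i}. lr (eps (int k) \<omega>) powr \<alpha>)" by (simp add: prod_nonneg)
      have "ennreal (\<bar>eproc G eps (int i) \<omega> - estar G eps eps' i \<omega>\<bar> powr \<alpha>)
         \<le> ennreal ((\<Prod>k\<in>{1..i}. lr (eps (int k) \<omega>) powr \<alpha>) * \<bar>eproc G eps 0 \<omega> - estar G eps eps' 0 \<omega>\<bar> powr \<alpha>)"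
        using elim by (intro ennreal_leI) blast
      also have "\<dots> = fA (\<lambda>j\<in>A. X j \<omega>) * gB (\<lambda>j\<in>B. X j \<omega>)"
        unfolding fAe gBe using P0 by (simp add: ennreal_mult prod_ennreal)
      finally show ?case .
    qed
  qed
  also have "\<dots> = (\<integral>\<^sup>+\<omega>. fA (\<lambda>j\<in>A. X j \<omega>) \<partial>M) * (\<integral>\<^sup>+\<omega>. gB (\<lambda>j\<in>B. X j \<omega>) \<partial>M)"
    by (rule indep_two_nn[OF AB fAm gBm])
  also have "(\<integral>\<^sup>+\<omega>. fA (\<lambda>j\<in>A. X j \<omega>) \<partial>M) = (\<integral>\<^sup>+z. ennreal (lr z powr \<alpha>) \<partial>mu) ^ i"
  proof -
    have "(\<integral>\<^sup>+\<omega>. fA (\<lambda>j\<in>A. X j \<omega>) \<partial>M)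
        = (\<integral>\<^sup>+\<omega>. (\<Prod>k\<in>{1..i}. (\<lambda>z. ennreal (lr z powr \<alpha>)) (eps (int k) \<omega>)) \<partial>M)"
      by (simp add: fAe)
    also have "\<dots> = (\<Prod>k\<in>{1..i}. \<integral>\<^sup>+z. ennreal (lr z powr \<alpha>) \<partial>mu)"
      by (rule prod_indep) (auto simp: inj_on_def)
    finally show ?thesis by simp
  qed
  also have "(\<integral>\<^sup>+\<omega>. gB (\<lambda>j\<in>B. X j \<omega>) \<partial>M) = (\<integral>\<^sup>+\<omega>. ennreal (\<bar>eproc G eps 0 \<omega> - estar G eps eps' 0 \<omega>\<bar> powr \<alpha>) \<partial>M)"
    by (simp add: gBe)
  finally show ?thesis .
qed

lemma E0_fin:
  assumes a: "0 < \<alpha>" "\<alpha> \<le> 1"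
    and mom: "(\<integral>\<^sup>+\<omega>. ennreal (\<bar>eproc G eps 0 \<omega> - t0\<bar> powr \<alpha>) \<partial>M) < \<infinity>"
  shows "(\<integral>\<^sup>+\<omega>. ennreal (\<bar>eproc G eps 0 \<omega> - estar G eps eps' 0 \<omega>\<bar> powr \<alpha>) \<partial>M) < \<infinity>"
proof -
  have "(\<integral>\<^sup>+\<omega>. ennreal (\<bar>eproc G eps 0 \<omega> - estar G eps eps' 0 \<omega>\<bar> powr \<alpha>) \<partial>M)
      \<le> (\<integral>\<^sup>+\<omega>. ennreal (\<bar>eproc G eps 0 \<omega> - t0\<bar> powr \<alpha>) + ennreal (\<bar>estar G eps eps' 0 \<omega> - t0\<bar> powr \<alpha>) \<partial>M)"
  proof (rule nn_integral_mono)
    fix \<omega>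
    have "\<bar>eproc G eps 0 \<omega> - estar G eps eps' 0 \<omega>\<bar> powr \<alpha>
        \<le> (\<bar>eproc G eps 0 \<omega> - t0\<bar> + \<bar>estar G eps eps' 0 \<omega> - t0\<bar>) powr \<alpha>"
      using a by (intro powr_mono2) auto
    also have "\<dots> \<le> \<bar>eproc G eps 0 \<omega> - t0\<bar> powr \<alpha> + \<bar>estar G eps eps' 0 \<omega> - t0\<bar> powr \<alpha>"
      using a by (intro powr_subadd) auto
    finally show "ennreal (\<bar>eproc G eps 0 \<omega> - estar G eps eps' 0 \<omega>\<bar> powr \<alpha>)
        \<le> ennreal (\<bar>eproc G eps 0 \<omega> - t0\<bar> powr \<alpha>) + ennreal (\<bar>estar G eps eps' 0 \<omega> - t0\<bar> powr \<alpha>)"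
      by (simp add: ennreal_plus[symmetric] del: ennreal_plus)
  qed
  also have "\<dots> = (\<integral>\<^sup>+\<omega>. ennreal (\<bar>eproc G eps 0 \<omega> - t0\<bar> powr \<alpha>) \<partial>M)
       + (\<integral>\<^sup>+\<omega>. ennreal (\<bar>estar G eps eps' 0 \<omega> - t0\<bar> powr \<alpha>) \<partial>M)"
    by (rule nn_integral_add) measurable
  also have "(\<integral>\<^sup>+\<omega>. ennreal (\<bar>estar G eps eps' 0 \<omega> - t0\<bar> powr \<alpha>) \<partial>M)
       = (\<integral>\<^sup>+\<omega>. ennreal (\<bar>eproc G eps 0 \<omega> - t0\<bar> powr \<alpha>) \<partial>M)"
  proof -
    have "(\<integral>\<^sup>+\<omega>. ennreal (\<bar>estar G eps eps' 0 \<omega> - t0\<bar> powr \<alpha>) \<partial>M)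
        = (\<integral>\<^sup>+x. ennreal (\<bar>x - t0\<bar> powr \<alpha>) \<partial>distr M borel (estar G eps eps' 0))"
      by (rule nn_integral_distr[symmetric]) measurable
    also have "\<dots> = (\<integral>\<^sup>+x. ennreal (\<bar>x - t0\<bar> powr \<alpha>) \<partial>distr M borel (eproc G eps 0))"
      by (simp add: e_law es_law)
    also have "\<dots> = (\<integral>\<^sup>+\<omega>. ennreal (\<bar>eproc G eps 0 \<omega> - t0\<bar> powr \<alpha>) \<partial>M)"
      by (rule nn_integral_distr) measurable
    finally show ?thesis .
  qed
  also have "\<dots> + \<dots> < \<infinity>" using mom by simp
  finally show ?thesis .
qed

end

lemma lip_from_deriv:
  fixes f f' :: "real \<Rightarrow> real"
  assumes d: "\<And>x. (f has_real_derivative f' x) (at x)" and B: "\<And>x. \<bar>f' x\<bar> \<le> B"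
  shows "\<bar>f a - f b\<bar> \<le> B * \<bar>a - b\<bar>"
proof -
  have *: "\<bar>f y - f x\<bar> \<le> B * \<bar>y - x\<bar>" if xy: "x < y" for x y
  proof -
    obtain z where z: "x < z" "z < y" "f y - f x = (y - x) * f' z"
      using MVT2[OF xy d] by blast
    have "\<bar>f y - f x\<bar> = \<bar>y - x\<bar> * \<bar>f' z\<bar>" using z by (simp add: abs_mult)
    also have "\<dots> \<le> \<bar>y - x\<bar> * B" by (intro mult_left_mono B) simp
    finally show ?thesis by (simp add: mult.commute)
  qed
  show ?thesis
  proof (cases a b rule: linorder_cases)
    case less then show ?thesis using *[OF less] by (simp add: abs_minus_commute)
  next
    case greater then show ?thesis using *[OF greater] by simp
  qed simp
qed

lemma min_sq_le_powr:
  fixes x \<alpha> :: real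
  assumes x: "0 \<le> x" and a: "0 < \<alpha>" "\<alpha> \<le> 1"
  shows "(min x 2)\<^sup>2 \<le> 4 * x powr \<alpha>"
proof (cases "2 \<le> x")
  case True
  then have "1 \<le> x powr \<alpha>" using a by (intro ge_one_powr_ge_zero) auto
  moreover have "min x 2 = 2" using True by (simp add: min_def)
  ultimately show ?thesis by simp
next
  case False
  define y where "y = x / 2"
  have y: "0 \<le> y" "y \<le> 1" using x False by (auto simp: y_def)
  have "y powr 2 \<le> y powr \<alpha>" using y a by (intro powr_mono') auto
  then have "y\<^sup>2 \<le> y powr \<alpha>" using y by (simp add: powr_numeral)
  also have "y powr \<alpha> \<le> x powr \<alpha>" using y x a by (intro powr_mono2) (auto simp: y_def)
  finally have "y\<^sup>2 \<le> x powr \<alpha>" .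
  moreover have "(min x 2)\<^sup>2 = 4 * y\<^sup>2" using False by (simp add: y_def min_def power2_eq_square)
  ultimately show ?thesis by simp
qed

theorem proposition5:
  fixes M :: "'a measure" and N :: "'e measure"
    and eps :: "int \<Rightarrow> 'a \<Rightarrow> 'e" and eps' :: "'a \<Rightarrow> 'e"
    and R :: "real \<Rightarrow> 'e \<Rightarrow> real" and G :: "(nat \<Rightarrow> 'e) \<Rightarrow> real"
    and q t0 C0 :: real and p :: nat and D :: "nat \<Rightarrow> real \<Rightarrow> real \<Rightarrow> real"
  assumes M: "prob_space M"
    and indep: "prob_space.indep_vars M (\<lambda>_. N)
                  (\<lambda>j. case j of None \<Rightarrow> eps' | Some i \<Rightarrow> eps i) (UNIV :: int option set)"
    and ident: "\<And>i. distr M N (eps i) = distr M N (eps 0)"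
    and ident': "distr M N eps' = distr M N (eps 0)"
    and R_meas: "(\<lambda>(x, z). R x z) \<in> borel_measurable (borel \<Otimes>\<^sub>M N)"
    and q: "q > 0"
    and lip_fin: "AE \<omega> in M. lipR R (eps 0 \<omega>) < \<infinity>"
    and Lq: "integrable M (\<lambda>\<omega>. (enn2real (lipR R (eps 0 \<omega>)) + \<bar>R t0 (eps 0 \<omega>)\<bar>) powr q)"
    and Elog: "(\<integral>\<^sup>+ \<omega>. log_pos (lipR R (eps 0 \<omega>)) \<partial>M)
                 < (\<integral>\<^sup>+ \<omega>. log_neg (lipR R (eps 0 \<omega>)) \<partial>M)"
    and G_meas: "G \<in> borel_measurable (Pi\<^sub>M UNIV (\<lambda>_. N))"
    and stationary: "\<And>i. AE \<omega> in M. eproc G eps i \<omega> = R (eproc G eps (i - 1) \<omega>) (eps i \<omega>)"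
    and F_diff_u: "\<And>l u v. l < p \<Longrightarrow>
          ((\<lambda>u'. F1l M R (eps 0) l u' v) has_real_derivative F1l M R (eps 0) (Suc l) u v) (at u)"
    and F_diff_v: "\<And>l u v. l \<le> p \<Longrightarrow>
          ((\<lambda>v'. F1l M R (eps 0) l u v') has_real_derivative D l u v) (at v)"
    and F_bdd: "\<And>l. l \<le> p \<Longrightarrow>
          bdd_above (range (\<lambda>(u, v). \<bar>D l u v\<bar>)) \<and>
          bdd_above (range (\<lambda>(u, v). \<bar>F1l M R (eps 0) l u v\<bar>)) \<and>
          (SUP (u, v). \<bar>D l u v\<bar>) + (SUP (u, v). \<bar>F1l M R (eps 0) l u v\<bar>) < C0"
  shows "\<exists>chi. 0 < chi \<and> chi < 1 \<and>
           (\<forall>l \<le> p. (\<lambda>i. omega_l M R G eps eps' l i) \<in> O(\<lambda>i. chi ^ i)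
                     \<and> summable (\<lambda>i. omega_l M R G eps eps' l i))"
proof -
  interpret P: P5 M N eps eps' R G q t0
    using M indep ident ident' R_meas q lip_fin Lq Elog G_meas stationary
    by (auto simp: P5_def P5_axioms_def)
  obtain \<alpha> where \<alpha>: "0 < \<alpha>" "\<alpha> \<le> 1" and rho: "(\<integral>\<^sup>+z. ennreal (P.lr z powr \<alpha>) \<partial>P.mu) < 1"
    and cfin: "(\<integral>\<^sup>+z. ennreal (\<bar>R t0 z - t0\<bar> powr \<alpha>) \<partial>P.mu) < \<infinity>"
    using P.alpha_choice by blast
  have mom: "(\<integral>\<^sup>+\<omega>. ennreal (\<bar>eproc G eps 0 \<omega> - t0\<bar> powr \<alpha>) \<partial>M) < \<infinity>"
    by (rule P.moment_bound[OF \<alpha> rho cfin])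
  have E0f: "(\<integral>\<^sup>+\<omega>. ennreal (\<bar>eproc G eps 0 \<omega> - estar G eps eps' 0 \<omega>\<bar> powr \<alpha>) \<partial>M) < \<infinity>"
    by (rule P.E0_fin[OF \<alpha> mom])
  obtain \<rho>r where \<rho>r: "(\<integral>\<^sup>+z. ennreal (P.lr z powr \<alpha>) \<partial>P.mu) = ennreal \<rho>r" "0 \<le> \<rho>r"
    using rho by (cases "(\<integral>\<^sup>+z. ennreal (P.lr z powr \<alpha>) \<partial>P.mu)" rule: ennreal_cases) auto
  have \<rho>r1: "\<rho>r < 1" using rho unfolding \<rho>r(1) by (simp add: ennreal_less_one_iff)
  obtain E0 where E0: "(\<integral>\<^sup>+\<omega>. ennreal (\<bar>eproc G eps 0 \<omega> - estar G eps eps' 0 \<omega>\<bar> powr \<alpha>) \<partial>M) = ennreal E0" "0 \<le> E0"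
    using E0f by (cases "(\<integral>\<^sup>+\<omega>. ennreal (\<bar>eproc G eps 0 \<omega> - estar G eps eps' 0 \<omega>\<bar> powr \<alpha>) \<partial>M)" rule: ennreal_cases) auto
  have bnd: "(\<integral>\<^sup>+\<omega>. ennreal (\<bar>eproc G eps (int i) \<omega> - estar G eps eps' i \<omega>\<bar> powr \<alpha>) \<partial>M) \<le> ennreal (\<rho>r ^ i * E0)" for i
    using P.main_bound[OF \<alpha>(1), of i] unfolding \<rho>r(1) E0(1) using \<rho>r E0 by (simp add: ennreal_power ennreal_mult)
  define chi where "chi = max (sqrt \<rho>r) (1 / 2)"
  have "sqrt \<rho>r < 1" using real_sqrt_less_mono[OF \<rho>r1] by simp
  then have chi: "0 < chi" "chi < 1" by (auto simp: chi_def)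
  have C0pos: "0 \<le> C0"
  proof -
    have "0 \<le> (SUP (u, v). \<bar>D 0 u v\<bar>)"
      using F_bdd[of 0] by (intro cSUP_upper2[of _ _ "(0, 0)"]) auto
    moreover have "0 \<le> (SUP (u, v). \<bar>F1l M R (eps 0) 0 u v\<bar>)"
      using F_bdd[of 0] by (intro cSUP_upper2[of _ _ "(0, 0)"]) auto
    ultimately show ?thesis using F_bdd[of 0] by simp
  qed
  define K where "K = 2 * C0 * sqrt E0"
  have K0: "0 \<le> K" using C0pos E0 by (simp add: K_def)
  have om: "0 \<le> omega_l M R G eps eps' l i \<and> omega_l M R G eps eps' l i \<le> K * chi ^ i" if l: "l \<le> p" for l i
  proof -
    define B1 where "B1 = (SUP (u, v). \<bar>D l u v\<bar>)"
    define B2 where "B2 = (SUP (u, v). \<bar>F1l M R (eps 0) l u v\<bar>)"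
    have bd1: "\<bar>D l u v\<bar> \<le> B1" for u v
      unfolding B1_def using F_bdd[OF l] by (intro cSUP_upper2[of _ _ "(u, v)"]) auto
    have bd2: "\<bar>F1l M R (eps 0) l u v\<bar> \<le> B2" for u v
      unfolding B2_def using F_bdd[OF l] by (intro cSUP_upper2[of _ _ "(u, v)"]) auto
    have B1C: "B1 \<le> C0" and B2C: "B2 \<le> C0"
      using F_bdd[OF l] bd1[of 0 0] bd2[of 0 0] unfolding B1_def[symmetric] B2_def[symmetric] by linarith+
    have diff: "(F1l M R (eps 0) l u a - F1l M R (eps 0) l u b)\<^sup>2 \<le> 4 * C0\<^sup>2 * \<bar>a - b\<bar> powr \<alpha>" for u a b
    proof -
      have d1: "\<bar>F1l M R (eps 0) l u a - F1l M R (eps 0) l u b\<bar> \<le> C0 * \<bar>a - b\<bar>"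
      proof -
        have "\<bar>F1l M R (eps 0) l u a - F1l M R (eps 0) l u b\<bar> \<le> B1 * \<bar>a - b\<bar>"
          by (rule lip_from_deriv[OF F_diff_v[OF l] bd1])
        also have "\<dots> \<le> C0 * \<bar>a - b\<bar>" using B1C by (intro mult_right_mono) auto
        finally show ?thesis .
      qed
      have d2: "\<bar>F1l M R (eps 0) l u a - F1l M R (eps 0) l u b\<bar> \<le> C0 * 2"
        using bd2[of u a] bd2[of u b] B2C by linarith
      have "\<bar>F1l M R (eps 0) l u a - F1l M R (eps 0) l u b\<bar> \<le> C0 * min \<bar>a - b\<bar> 2"
        using d1 d2 by (simp add: min_def)
      then have "(F1l M R (eps 0) l u a - F1l M R (eps 0) l u b)\<^sup>2 \<le> (C0 * min \<bar>a - b\<bar> 2)\<^sup>2"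
        by (metis abs_ge_zero power2_abs power_mono)
      also have "\<dots> = C0\<^sup>2 * (min \<bar>a - b\<bar> 2)\<^sup>2" by (simp add: power_mult_distrib)
      also have "\<dots> \<le> C0\<^sup>2 * (4 * \<bar>a - b\<bar> powr \<alpha>)"
        using \<alpha> by (intro mult_left_mono min_sq_le_powr) auto
      finally show ?thesis by simp
    qed
    have Fcont: "isCont (\<lambda>v. F1l M R (eps 0) l u v) v" for u v
      using F_diff_v[OF l, of u v] by (rule DERIV_isCont)
    have Fm[measurable]: "(\<lambda>v. F1l M R (eps 0) l u v) \<in> borel_measurable borel" for u
      by (intro borel_measurable_continuous_onI continuous_at_imp_continuous_on) (auto simp: Fcont)
    have L2b: "L2norm M (\<lambda>\<omega>. F1l M R (eps 0) l u (eproc G eps (int i) \<omega>) - F1l M R (eps 0) l u (estar G eps eps' i \<omega>))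
        \<le> K * chi ^ i" for u
    proof -
      have "(\<integral>\<omega>. (F1l M R (eps 0) l u (eproc G eps (int i) \<omega>) - F1l M R (eps 0) l u (estar G eps eps' i \<omega>))\<^sup>2 \<partial>M)
          \<le> 4 * C0\<^sup>2 * (\<rho>r ^ i * E0)"
      proof (rule integral_real_bounded)
        show "0 \<le> 4 * C0\<^sup>2 * (\<rho>r ^ i * E0)" using \<rho>r E0 by simp
        have "(\<integral>\<^sup>+\<omega>. ennreal ((F1l M R (eps 0) l u (eproc G eps (int i) \<omega>) - F1l M R (eps 0) l u (estar G eps eps' i \<omega>))\<^sup>2) \<partial>M)
            \<le> (\<integral>\<^sup>+\<omega>. ennreal (4 * C0\<^sup>2) * ennreal (\<bar>eproc G eps (int i) \<omega> - estar G eps eps' i \<omega>\<bar> powr \<alpha>) \<partial>M)"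
          by (intro nn_integral_mono) (simp add: ennreal_mult[symmetric] ennreal_leI diff)
        also have "\<dots> = ennreal (4 * C0\<^sup>2) * (\<integral>\<^sup>+\<omega>. ennreal (\<bar>eproc G eps (int i) \<omega> - estar G eps eps' i \<omega>\<bar> powr \<alpha>) \<partial>M)"
          by (rule nn_integral_cmult) measurable
        also have "\<dots> \<le> ennreal (4 * C0\<^sup>2) * ennreal (\<rho>r ^ i * E0)"
          by (intro mult_left_mono bnd) simp
        also have "\<dots> = ennreal (4 * C0\<^sup>2 * (\<rho>r ^ i * E0))"
          using \<rho>r E0 by (simp add: ennreal_mult)
        finally show "(\<integral>\<^sup>+\<omega>. ennreal ((F1l M R (eps 0) l u (eproc G eps (int i) \<omega>) - F1l M R (eps 0) l u (estar G eps eps' i \<omega>))\<^sup>2) \<partial>M)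
            \<le> ennreal (4 * C0\<^sup>2 * (\<rho>r ^ i * E0))" .
      qed
      then have "L2norm M (\<lambda>\<omega>. F1l M R (eps 0) l u (eproc G eps (int i) \<omega>) - F1l M R (eps 0) l u (estar G eps eps' i \<omega>))
          \<le> sqrt (4 * C0\<^sup>2 * (\<rho>r ^ i * E0))"
        unfolding L2norm_def by (rule real_sqrt_le_mono)
      also have "sqrt (4 * C0\<^sup>2 * (\<rho>r ^ i * E0)) = K * sqrt \<rho>r ^ i"
        using C0pos \<rho>r E0 by (simp add: K_def real_sqrt_mult real_sqrt_power)
      also have "\<dots> \<le> K * chi ^ i"
        using K0 \<rho>r by (intro mult_left_mono power_mono) (auto simp: chi_def)
      finally show ?thesis .
    qed
    have bdd: "bdd_above (range (\<lambda>u. L2norm M (\<lambda>\<omega>. F1l M R (eps 0) l u (eproc G eps (int i) \<omega>) - F1l M R (eps 0) l u (estar G eps eps' i \<omega>))))"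
      using L2b by (intro bdd_aboveI2) auto
    have "omega_l M R G eps eps' l i \<le> K * chi ^ i"
      unfolding omega_l_def by (rule cSUP_least) (auto intro: L2b)
    moreover have "0 \<le> omega_l M R G eps eps' l i"
      unfolding omega_l_def by (rule cSUP_upper2[OF bdd UNIV_I[of 0]]) (simp add: L2norm_def)
    ultimately show ?thesis by simp
  qed
  show ?thesis
  proof (intro exI[of _ chi] conjI chi allI impI)
    fix l assume l: "l \<le> p"
    show "(\<lambda>i. omega_l M R G eps eps' l i) \<in> O(\<lambda>i. chi ^ i)"
    proof (rule bigoI[of _ K])
      show "\<forall>\<^sub>F i in at_top. norm (omega_l M R G eps eps' l i) \<le> K * norm (chi ^ i)"
        using om[OF l] chi by (intro always_eventually allI) (simp add: abs_of_nonneg)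
    qed
    show "summable (\<lambda>i. omega_l M R G eps eps' l i)"
    proof (rule summable_comparison_test)
      show "\<exists>N. \<forall>n\<ge>N. norm (omega_l M R G eps eps' l n) \<le> K * chi ^ n"
        using om[OF l] by (intro exI[of _ 0]) auto
      show "summable (\<lambda>n. K * chi ^ n)"
        using chi by (intro summable_mult summable_geometric) simp
    qed
  qed
qed

end
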